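(* Let $n$ and $k$ be even integers with $1\le k<n/2$. Then $B(n,k)\neq C(n,k)$ if and only if $k^2\equiv\pm1\pmod{n/2}$. Moreover, if $k^2\equiv1\pmod{n/2}$ then $B(n,k)=\langle C(n,k),\lambda\rangle=\langle\rho,\delta,\beta,\lambda\rangle$, and if $k^2\equiv-1\pmod{n/2}$ then $B(n,k)=\langle C(n,k),\tau\rangle=\langle\rho,\delta,\beta,\tau\rangle$.
   Context: $\mathrm{DGP}(n,k)$ ($1\le k<n/2$) is the graph with vertex set $\{(u_i,j),(v_i,j): 0\le i\le n-1,\ j\in\{0,1\}\}$ and edges $\{(u_i,j),(u_{i+1},1-j)\}$ (outer edges, set $\mathcal{O}$), $\{(u_i,j),(v_i,1-j)\}$ (spokes, set $\mathcal{S}$), $\{(v_i,j),(v_{i+k},1-j)\}$ (inner edges, set $\mathcal{I}$), subscripts mod $n$ (the canonical double cover of $\mathrm{GP}(n,k)$). $A(n,k)$ is its automorphism group, $B(n,k)$ the setwise stabilizer of $\mathcal{S}$ in $A(n,k)$, and $C(n,k)$ the subgroup of $A(n,k)$ stabilizing each of $\mathcal{O},\mathcal{I},\mathcal{S}$ setwise. Permutations: $(u_i,j)^\rho=(u_{i+1},j)$, $(v_i,j)^\rho=(v_{i+1},j)$; $(u_i,j)^\delta=(u_{-i},j)$, $(v_i,j)^\delta=(v_{-i},j)$; $(u_i,j)^\beta=(u_i,1-j)$, $(v_i,j)^\beta=(v_i,1-j)$. $\lambda$: if $i+j$ odd, $(u_i,j)\mapsto(v_{1+(i-k)k},j)$,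 $(v_i,j)\mapsto(u_{ik},j)$; if $i+j$ even, $(u_i,j)\mapsto(v_{ik},j)$, $(v_i,j)\mapsto(u_{1+(i-k)k},j)$. $\tau$: if $i+j$ odd, $(u_i,j)\mapsto(v_{-1+(i-k)k},j)$, $(v_i,j)\mapsto(u_{ik},j)$; if $i+j$ even, $(u_i,j)\mapsto(v_{ik},j)$, $(v_i,j)\mapsto(u_{-1+(i-k)k},j)$. *)

theory Defs
  imports "HOL-Algebra.Algebra" "HOL-Number_Theory.Cong"
begin

text \<open>Vertices of DGP(n,k): Uv i j stands for (u_i, j), Vv i j for (v_i, j),
  with indices i in {0..n-1} (integers, taken mod n) and j in {0,1}.\<close>

datatype dvert = Uv int int | Vv int int

definition dgp_verts :: "int \<Rightarrow> dvert set" where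
  "dgp_verts n = {Uv i j | i j. 0 \<le> i \<and> i < n \<and> j \<in> {0,1}}
               \<union> {Vv i j | i j. 0 \<le> i \<and> i < n \<and> j \<in> {0,1}}"

definition dgp_outer :: "int \<Rightarrow> dvert set set" where
  "dgp_outer n = {{Uv i j, Uv ((i+1) mod n) (1-j)} | i j. 0 \<le> i \<and> i < n \<and> j \<in> {0,1}}"

definition dgp_spokes :: "int \<Rightarrow> dvert set set" where
  "dgp_spokes n = {{Uv i j, Vv i (1-j)} | i j. 0 \<le> i \<and> i < n \<and> j \<in> {0,1}}"

definition dgp_inner :: "int \<Rightarrow> int \<Rightarrow> dvert set set" where
  "dgp_inner n k = {{Vv i j, Vv ((i+k) mod n) (1-j)} | i j. 0 \<le> i \<and> i < n \<and> j \<in> {0,1}}"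

definition dgp_edges :: "int \<Rightarrow> int \<Rightarrow> dvert set set" where
  "dgp_edges n k = dgp_outer n \<union> dgp_spokes n \<union> dgp_inner n k"

abbreviation dgp_sym :: "int \<Rightarrow> (dvert \<Rightarrow> dvert) monoid" where
  "dgp_sym n \<equiv> BijGroup (dgp_verts n)"

definition autA :: "int \<Rightarrow> int \<Rightarrow> (dvert \<Rightarrow> dvert) set" where
  "autA n k = {f \<in> Bij (dgp_verts n).
     \<forall>x\<in>dgp_verts n. \<forall>y\<in>dgp_verts n.
       ({x, y} \<in> dgp_edges n k \<longleftrightarrow> {f x, f y} \<in> dgp_edges n k)}"

definition edge_image :: "(dvert \<Rightarrow> dvert) \<Rightarrow> dvert set set \<Rightarrow> dvert set set" where
  "edge_image f E = (\<lambda>e. f ` e) ` E"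

definition autB :: "int \<Rightarrow> int \<Rightarrow> (dvert \<Rightarrow> dvert) set" where
  "autB n k = {f \<in> autA n k. edge_image f (dgp_spokes n) = dgp_spokes n}"

definition autC :: "int \<Rightarrow> int \<Rightarrow> (dvert \<Rightarrow> dvert) set" where
  "autC n k = {f \<in> autA n k. edge_image f (dgp_outer n) = dgp_outer n
                            \<and> edge_image f (dgp_inner n k) = dgp_inner n k
                            \<and> edge_image f (dgp_spokes n) = dgp_spokes n}"

definition rho :: "int \<Rightarrow> dvert \<Rightarrow> dvert" where
  "rho n = restrict (\<lambda>x. case x of Uv i j \<Rightarrow> Uv ((i+1) mod n) j
                                  | Vv i j \<Rightarrow> Vv ((i+1) mod n) j) (dgp_verts n)"

definition delta :: "int \<Rightarrow> dvert \<Rightarrow> dvert" where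
  "delta n = restrict (\<lambda>x. case x of Uv i j \<Rightarrow> Uv ((- i) mod n) j
                                    | Vv i j \<Rightarrow> Vv ((- i) mod n) j) (dgp_verts n)"

definition beta :: "int \<Rightarrow> dvert \<Rightarrow> dvert" where
  "beta n = restrict (\<lambda>x. case x of Uv i j \<Rightarrow> Uv i (1-j)
                                   | Vv i j \<Rightarrow> Vv i (1-j)) (dgp_verts n)"

definition lam :: "int \<Rightarrow> int \<Rightarrow> dvert \<Rightarrow> dvert" where
  "lam n k = restrict (\<lambda>x. case x of
       Uv i j \<Rightarrow> (if odd (i+j) then Vv ((1 + (i-k)*k) mod n) j else Vv ((i*k) mod n) j)
     | Vv i j \<Rightarrow> (if odd (i+j) then Uv ((i*k) mod n) j else Uv ((1 + (i-k)*k) mod n) j))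
     (dgp_verts n)"

definition tau :: "int \<Rightarrow> int \<Rightarrow> dvert \<Rightarrow> dvert" where
  "tau n k = restrict (\<lambda>x. case x of
       Uv i j \<Rightarrow> (if odd (i+j) then Vv ((-1 + (i-k)*k) mod n) j else Vv ((i*k) mod n) j)
     | Vv i j \<Rightarrow> (if odd (i+j) then Uv ((i*k) mod n) j else Uv ((-1 + (i-k)*k) mod n) j))
     (dgp_verts n)"

end

theory Submission
  imports Defs
begin

locale dgp =
  fixes n k :: int
  assumes n_even: "even n" and k_even: "even k" and k_ge: "1 \<le> k" and k_lt: "2*k < n"
begin

lemma mod2: "(x::int) mod 2 = 0 \<or> x mod 2 = 1" by presburger

lemma k2: "k \<ge> 2" using k_even k_ge by presburger
lemma n6: "n \<ge> 6" using k2 k_lt n_even by presburger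
lemma npos: "n > 0" using n6 by simp

definition U :: "int \<Rightarrow> int \<Rightarrow> dvert" where "U m e = Uv (m mod n) ((m+e) mod 2)"
definition W :: "int \<Rightarrow> int \<Rightarrow> dvert" where "W m e = Vv (m mod n) ((m+e) mod 2)"

lemma par_aux: "n dvd (m - m') \<Longrightarrow> ((m+e) mod 2 = (m'+e') mod 2) = even (e - e')"
proof -
  assume "n dvd (m - m')"
  then have "even (m - m')" using n_even by (meson dvd_trans)
  then obtain q where "m = m' + 2*q" by (metis add_diff_cancel_left' diff_add_cancel dvd_def)
  then show ?thesis by presburger
qed

lemma U_eq: "U m e = U m' e' \<longleftrightarrow> n dvd (m - m') \<and> even (e - e')"
proof -
  have "U m e = U m' e' \<longleftrightarrow> (m mod n = m' mod n \<and> (m+e) mod 2 = (m'+e') mod 2)"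
    by (simp only: U_def dvert.inject)
  then show ?thesis using par_aux by (metis mod_eq_dvd_iff)
qed
lemma W_eq: "W m e = W m' e' \<longleftrightarrow> n dvd (m - m') \<and> even (e - e')"
proof -
  have "W m e = W m' e' \<longleftrightarrow> (m mod n = m' mod n \<and> (m+e) mod 2 = (m'+e') mod 2)"
    by (simp only: W_def dvert.inject)
  then show ?thesis using par_aux by (metis mod_eq_dvd_iff)
qed
lemma UW_neq[simp]: "U m e \<noteq> W m' e'" "W m' e' \<noteq> U m e"
  by (auto simp: U_def W_def)

lemma U_eqI: "n dvd (m - m') \<Longrightarrow> even (e - e') \<Longrightarrow> U m e = U m' e'"
  using U_eq by blast
lemma W_eqI: "n dvd (m - m') \<Longrightarrow> even (e - e') \<Longrightarrow> W m e = W m' e'"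
  using W_eq by blast

lemma U_in[simp]: "U m e \<in> dgp_verts n"
  using npos by (auto simp: U_def dgp_verts_def)
lemma W_in[simp]: "W m e \<in> dgp_verts n"
  using npos by (auto simp: W_def dgp_verts_def)

lemma Uv_as_U: "0 \<le> i \<Longrightarrow> i < n \<Longrightarrow> j \<in> {0,1} \<Longrightarrow> Uv i j = U i (j - i)"
  by (auto simp: U_def)
lemma Vv_as_W: "0 \<le> i \<Longrightarrow> i < n \<Longrightarrow> j \<in> {0,1} \<Longrightarrow> Vv i j = W i (j - i)"
  by (auto simp: W_def)

lemma vert_cases:
  assumes "x \<in> dgp_verts n"
  obtains m where "x = U m 0" | m where "x = U m 1" | m where "x = W m 0" | m where "x = W m 1"
proof -
  have "\<exists>m. x = U m 0 \<or> x = U m 1 \<or> x = W m 0 \<or> x = W m 1"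
  proof -
    from assms consider (u) i j where "x = Uv i j" "0 \<le> i" "i < n" "j \<in> {0,1}"
      | (v) i j where "x = Vv i j" "0 \<le> i" "i < n" "j \<in> {0,1}"
      unfolding dgp_verts_def by blast
    then show ?thesis
    proof cases
      case u
      then have "x = U i (j - i)" using Uv_as_U by blast
      moreover have "U i (j - i) = U i 0 \<or> U i (j - i) = U i 1"
        by (simp add: U_eq) presburger
      ultimately show ?thesis by blast
    next
      case v
      then have "x = W i (j - i)" using Vv_as_W by blast
      moreover have "W i (j - i) = W i 0 \<or> W i (j - i) = W i 1"
        by (simp add: W_eq) presburger
      ultimately show ?thesis by blast
    qed
  qed
  then show ?thesis using that by blast
qed

lemma O_char: "dgp_outer n = {{U m e, U (m+1) e} | m e. True}"
proof (rule equalityI; rule subsetI)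
  fix x assume "x \<in> dgp_outer n"
  then obtain i j where x: "x = {Uv i j, Uv ((i+1) mod n) (1-j)}" "0 \<le> i" "i < n" "j \<in> {0,1}"
    unfolding dgp_outer_def by blast
  have "Uv ((i+1) mod n) (1-j) = U (i+1) (j - i)"
    using x(4) by (auto simp: U_def)
  then have "x = {U i (j - i), U (i+1) (j - i)}" using x Uv_as_U by simp
  then show "x \<in> {{U m e, U (m+1) e} | m e. True}" by blast
next
  fix x assume "x \<in> {{U m e, U (m+1) e} | m e. True}"
  then obtain m e where x: "x = {U m e, U (m+1) e}" by blast
  have "U (m+1) e = Uv ((m mod n + 1) mod n) (1 - (m+e) mod 2)"
    unfolding U_def dvert.inject mod_add_left_eq by (intro conjI refl) presburger
  have "\<exists>i j. x = {Uv i j, Uv ((i+1) mod n) (1-j)} \<and> 0 \<le> i \<and> i < n \<and> j \<in> {0,1}"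
    apply (rule exI[of _ "m mod n"], rule exI[of _ "(m+e) mod 2"])
    using npos \<open>U (m+1) e = _\<close> mod2[of "m+e"] by (simp add: x U_def)
  then show "x \<in> dgp_outer n" unfolding dgp_outer_def by blast
qed


lemma S_char: "dgp_spokes n = {{U m e, W m (e+1)} | m e. True}"
proof (rule equalityI; rule subsetI)
  fix x assume "x \<in> dgp_spokes n"
  then obtain i j where x: "x = {Uv i j, Vv i (1-j)}" "0 \<le> i" "i < n" "j \<in> {0,1}"
    unfolding dgp_spokes_def by blast
  have "Vv i (1-j) = W i (j - i + 1)"
    using x(2-4) by (auto simp: W_def)
  then have "x = {U i (j - i), W i (j - i + 1)}" using x Uv_as_U by simp
  then show "x \<in> {{U m e, W m (e+1)} | m e. True}" by blast
next
  fix x assume "x \<in> {{U m e, W m (e+1)} | m e. True}"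
  then obtain m e where x: "x = {U m e, W m (e+1)}" by blast
  have "W m (e+1) = Vv (m mod n) (1 - (m+e) mod 2)"
    unfolding W_def dvert.inject by (intro conjI refl) presburger
  have "\<exists>i j. x = {Uv i j, Vv i (1-j)} \<and> 0 \<le> i \<and> i < n \<and> j \<in> {0,1}"
    apply (rule exI[of _ "m mod n"], rule exI[of _ "(m+e) mod 2"])
    using npos \<open>W m (e+1) = _\<close> mod2[of "m+e"] by (simp add: x U_def)
  then show "x \<in> dgp_spokes n" unfolding dgp_spokes_def by blast
qed

lemma I_char: "dgp_inner n k = {{W m e, W (m+k) (e+1)} | m e. True}"
proof (rule equalityI; rule subsetI)
  fix x assume "x \<in> dgp_inner n k"
  then obtain i j where x: "x = {Vv i j, Vv ((i+k) mod n) (1-j)}" "0 \<le> i" "i < n" "j \<in> {0,1}"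
    unfolding dgp_inner_def by blast
  have "Vv ((i+k) mod n) (1-j) = W (i+k) (j - i + 1)"
  proof -
    have "j = 0 \<or> j = 1" using x(4) by auto
    then show ?thesis using k_even unfolding W_def dvert.inject by (intro conjI refl) presburger
  qed
  then have "x = {W i (j - i), W (i+k) (j - i + 1)}" using x Vv_as_W by simp
  then show "x \<in> {{W m e, W (m+k) (e+1)} | m e. True}" by blast
next
  fix x assume "x \<in> {{W m e, W (m+k) (e+1)} | m e. True}"
  then obtain m e where x: "x = {W m e, W (m+k) (e+1)}" by blast
  have "W (m+k) (e+1) = Vv ((m mod n + k) mod n) (1 - (m+e) mod 2)"
    unfolding W_def dvert.inject mod_add_left_eq using k_even by (intro conjI refl) presburger
  have "\<exists>i j. x = {Vv i j, Vv ((i+k) mod n) (1-j)} \<and> 0 \<le> i \<and> i < n \<and> j \<in> {0,1}"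
    apply (rule exI[of _ "m mod n"], rule exI[of _ "(m+e) mod 2"])
    using npos \<open>W (m+k) (e+1) = _\<close> mod2[of "m+e"] by (simp add: x W_def)
  then show "x \<in> dgp_inner n k" unfolding dgp_inner_def by blast
qed

lemma dvd_by: "(n::int) dvd yy \<Longrightarrow> xx = cc*yy + n*dd \<Longrightarrow> n dvd xx"
  by simp

lemma ev_by: "even (yy::int) \<Longrightarrow> xx = cc*yy + 2*dd \<Longrightarrow> even xx"
  by simp

lemma nbrO_U: "{U m e, y} \<in> dgp_outer n \<longleftrightarrow> y = U (m+1) e \<or> y = U (m-1) e"
proof
  assume "{U m e, y} \<in> dgp_outer n"
  then obtain a b where "{U m e, y} = {U a b, U (a+1) b}" unfolding O_char by blast
  then have "(U m e = U a b \<and> y = U (a+1) b) \<or> (U m e = U (a+1) b \<and> y = U a b)"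
    by (simp add: doubleton_eq_iff)
  then show "y = U (m+1) e \<or> y = U (m-1) e"
  proof
    assume h: "U m e = U a b \<and> y = U (a+1) b"
    then have d1: "n dvd (m - a)" and d2: "even (e - b)" by (simp_all add: U_eq)
    have "U (a+1) b = U (m+1) e"
      by (intro U_eqI dvd_by[OF d1, where cc="-1" and dd=0] ev_by[OF d2, where cc="-1" and dd=0]) simp_all
    then show ?thesis using h by simp
  next
    assume h: "U m e = U (a+1) b \<and> y = U a b"
    then have d1: "n dvd (m - (a+1))" and d2: "even (e - b)" by (simp_all add: U_eq)
    have "U a b = U (m-1) e"
      by (intro U_eqI dvd_by[OF d1, where cc="-1" and dd=0] ev_by[OF d2, where cc="-1" and dd=0]) simp_all
    then show ?thesis using h by simp
  qed
next
  assume "y = U (m+1) e \<or> y = U (m-1) e"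
  then show "{U m e, y} \<in> dgp_outer n"
  proof
    assume "y = U (m+1) e" then show ?thesis unfolding O_char by blast
  next
    assume "y = U (m-1) e"
    then have "{U m e, y} = {U (m-1) e, U (m-1+1) e}" by auto
    then show ?thesis unfolding O_char by blast
  qed
qed


lemma nbrO_W: "{W m e, y} \<notin> dgp_outer n"
  unfolding O_char by (auto simp: doubleton_eq_iff)

lemma nbrI_U: "{U m e, y} \<notin> dgp_inner n k"
  unfolding I_char by (auto simp: doubleton_eq_iff)

lemma nbrS_U: "{U m e, y} \<in> dgp_spokes n \<longleftrightarrow> y = W m (e+1)"
proof
  assume "{U m e, y} \<in> dgp_spokes n"
  then obtain a b where "{U m e, y} = {U a b, W a (b+1)}" unfolding S_char by blast
  then have h: "U m e = U a b \<and> y = W a (b+1)"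
    by (auto simp: doubleton_eq_iff)
  then have d1: "n dvd (m - a)" and d2: "even (e - b)" by (simp_all add: U_eq)
  have "W a (b+1) = W m (e+1)"
    by (intro W_eqI dvd_by[OF d1, where cc="-1" and dd=0] ev_by[OF d2, where cc="-1" and dd=0]) simp_all
  then show "y = W m (e+1)" using h by simp
next
  assume "y = W m (e+1)" then show "{U m e, y} \<in> dgp_spokes n" unfolding S_char by blast
qed

lemma nbrS_W: "{W m e, y} \<in> dgp_spokes n \<longleftrightarrow> y = U m (e+1)"
proof
  assume "{W m e, y} \<in> dgp_spokes n"
  then obtain a b where "{W m e, y} = {U a b, W a (b+1)}" unfolding S_char by blast
  then have h: "W m e = W a (b+1) \<and> y = U a b"
    by (auto simp: doubleton_eq_iff)
  then have d1: "n dvd (m - a)" and d2: "even (e - (b+1))" by (simp_all add: W_eq)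
  have "U a b = U m (e+1)"
    by (intro U_eqI dvd_by[OF d1, where cc="-1" and dd=0] ev_by[OF d2, where cc="-1" and dd="-1"]) simp_all
  then show "y = U m (e+1)" using h by simp
next
  assume "y = U m (e+1)"
  then have "{W m e, y} = {U m (e+1), W m (e+1+1)}"
    using W_eqI[of m m e "e+1+1"] by auto
  then show "{W m e, y} \<in> dgp_spokes n" unfolding S_char by blast
qed

lemma nbrI_W: "{W m e, y} \<in> dgp_inner n k \<longleftrightarrow> y = W (m+k) (e+1) \<or> y = W (m-k) (e+1)"
proof
  assume "{W m e, y} \<in> dgp_inner n k"
  then obtain a b where "{W m e, y} = {W a b, W (a+k) (b+1)}" unfolding I_char by blast
  then have "(W m e = W a b \<and> y = W (a+k) (b+1)) \<or> (W m e = W (a+k) (b+1) \<and> y = W a b)"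
    by (simp add: doubleton_eq_iff)
  then show "y = W (m+k) (e+1) \<or> y = W (m-k) (e+1)"
  proof
    assume h: "W m e = W a b \<and> y = W (a+k) (b+1)"
    then have d1: "n dvd (m - a)" and d2: "even (e - b)" by (simp_all add: W_eq)
    have "W (a+k) (b+1) = W (m+k) (e+1)"
      by (intro W_eqI dvd_by[OF d1, where cc="-1" and dd=0] ev_by[OF d2, where cc="-1" and dd=0]) simp_all
    then show ?thesis using h by simp
  next
    assume h: "W m e = W (a+k) (b+1) \<and> y = W a b"
    then have d1: "n dvd (m - (a+k))" and d2: "even (e - (b+1))" by (simp_all add: W_eq)
    have "W a b = W (m-k) (e+1)"
      by (intro W_eqI dvd_by[OF d1, where cc="-1" and dd=0] ev_by[OF d2, where cc="-1" and dd="-1"]) simp_all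
    then show ?thesis using h by simp
  qed
next
  assume "y = W (m+k) (e+1) \<or> y = W (m-k) (e+1)"
  then show "{W m e, y} \<in> dgp_inner n k"
  proof
    assume "y = W (m+k) (e+1)" then show ?thesis unfolding I_char by blast
  next
    assume "y = W (m-k) (e+1)"
    then have "{W m e, y} = {W (m-k) (e+1), W (m-k+k) (e+1+1)}"
      using W_eqI[of m m e "e+1+1"] by auto
    then show ?thesis unfolding I_char by blast
  qed
qed

definition isU :: "dvert \<Rightarrow> bool" where "isU x = (case x of Uv i j \<Rightarrow> True | Vv i j \<Rightarrow> False)"

lemma isU_simps[simp]: "isU (U m e)" "\<not> isU (W m e)"
  by (auto simp: isU_def U_def W_def)

lemma vert_UW: "x \<in> dgp_verts n \<Longrightarrow> (\<exists>m e. x = U m e) \<or> (\<exists>m e. x = W m e)"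
  by (erule vert_cases) blast+

lemma vert_U: "x \<in> dgp_verts n \<Longrightarrow> isU x \<Longrightarrow> \<exists>m e. x = U m e"
  using vert_UW by fastforce
lemma vert_W: "x \<in> dgp_verts n \<Longrightarrow> \<not> isU x \<Longrightarrow> \<exists>m e. x = W m e"
  using vert_UW by fastforce

lemma O_type: "{x,y} \<in> dgp_outer n \<Longrightarrow> isU x \<and> isU y"
  unfolding O_char by (auto simp: doubleton_eq_iff)
lemma I_type: "{x,y} \<in> dgp_inner n k \<Longrightarrow> \<not> isU x \<and> \<not> isU y"
  unfolding I_char by (auto simp: doubleton_eq_iff)
lemma S_type: "{x,y} \<in> dgp_spokes n \<Longrightarrow> isU x \<noteq> isU y"
  unfolding S_char by (auto simp: doubleton_eq_iff)

lemma E_split: "{x,y} \<in> dgp_edges n k \<longleftrightarrow> {x,y} \<in> dgp_outer n \<or> {x,y} \<in> dgp_spokes n \<or> {x,y} \<in> dgp_inner n k"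
  by (auto simp: dgp_edges_def)

lemma finite_V: "finite (dgp_verts n)"
proof -
  have "dgp_verts n \<subseteq> (\<lambda>(i,j). Uv i j) ` ({0..<n} \<times> {0..1}) \<union> (\<lambda>(i,j). Vv i j) ` ({0..<n} \<times> {0..1})"
    unfolding dgp_verts_def by force
  then show ?thesis by (rule finite_subset) auto
qed

lemma O_pairs: "dgp_outer n \<subseteq> Pow (dgp_verts n)" unfolding O_char by auto
lemma S_pairs: "dgp_spokes n \<subseteq> Pow (dgp_verts n)" unfolding S_char by auto
lemma I_pairs: "dgp_inner n k \<subseteq> Pow (dgp_verts n)" unfolding I_char by auto
lemma E_pairs: "dgp_edges n k \<subseteq> Pow (dgp_verts n)"
  using O_pairs S_pairs I_pairs by (auto simp: dgp_edges_def)

lemma n_ndvd2: "\<not> n dvd 2" using n6 zdvd_imp_le by fastforce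
lemma n_ndvd2k: "\<not> n dvd (2*k)" using k_lt k2 zdvd_imp_le by fastforce


definition pairsV :: "dvert set set" where
  "pairsV = {{x,y} | x y. x \<in> dgp_verts n \<and> y \<in> dgp_verts n}"

lemma O_pairsV: "dgp_outer n \<subseteq> pairsV" unfolding O_char pairsV_def using U_in by blast
lemma S_pairsV: "dgp_spokes n \<subseteq> pairsV" unfolding S_char pairsV_def using U_in W_in by blast
lemma I_pairsV: "dgp_inner n k \<subseteq> pairsV" unfolding I_char pairsV_def using W_in by blast
lemma E_pairsV: "dgp_edges n k \<subseteq> pairsV"
  using O_pairsV S_pairsV I_pairsV by (auto simp: dgp_edges_def)

definition stab :: "dvert set set \<Rightarrow> (dvert \<Rightarrow> dvert) set" where
  "stab Es = {f \<in> Bij (dgp_verts n). \<forall>x\<in>dgp_verts n. \<forall>y\<in>dgp_verts n.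
      ({x,y} \<in> Es \<longleftrightarrow> {f x, f y} \<in> Es)}"

lemma Bij_in: "f \<in> Bij S \<Longrightarrow> x \<in> S \<Longrightarrow> f x \<in> S"
  using Bij_imp_funcset by blast

lemma Bij_bij: "f \<in> Bij S \<Longrightarrow> bij_betw f S S"
  by (simp add: Bij_def)

lemma mult_apply: "g \<in> Bij S \<Longrightarrow> f \<in> Bij S \<Longrightarrow> x \<in> S \<Longrightarrow> (g \<otimes>\<^bsub>BijGroup S\<^esub> f) x = g (f x)"
  by (simp add: BijGroup_def compose_def)

lemma carrier_Bij[simp]: "carrier (BijGroup S) = Bij S"
  by (simp add: BijGroup_def)

lemma stab_subgroup: "subgroup (stab Es) (BijGroup (dgp_verts n))"
proof (rule group.subgroupI[OF group_BijGroup])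
  show "stab Es \<subseteq> carrier (BijGroup (dgp_verts n))" by (auto simp: stab_def)
  have "(\<lambda>x\<in>dgp_verts n. x) \<in> stab Es" by (simp add: stab_def id_Bij)
  then show "stab Es \<noteq> {}" by blast
next
  fix a assume a: "a \<in> stab Es"
  then have aB: "a \<in> Bij (dgp_verts n)" by (simp add: stab_def)
  have inv: "inv\<^bsub>BijGroup (dgp_verts n)\<^esub> a = (\<lambda>x\<in>dgp_verts n. inv_into (dgp_verts n) a x)"
    using inv_BijGroup[OF aB] .
  have bij: "bij_betw a (dgp_verts n) (dgp_verts n)" using aB by (simp add: Bij_def)
  show "inv\<^bsub>BijGroup (dgp_verts n)\<^esub> a \<in> stab Es"
    unfolding inv stab_def
  proof (intro CollectI conjI ballI)
    show "(\<lambda>x\<in>dgp_verts n. inv_into (dgp_verts n) a x) \<in> Bij (dgp_verts n)"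
      using restrict_inv_into_Bij[OF aB] .
  next
    fix x y assume x: "x \<in> dgp_verts n" and y: "y \<in> dgp_verts n"
    let ?x = "inv_into (dgp_verts n) a x" and ?y = "inv_into (dgp_verts n) a y"
    have xi: "?x \<in> dgp_verts n" "a ?x = x" using x bij
      by (auto simp: bij_betw_def inv_into_into f_inv_into_f)
    have yi: "?y \<in> dgp_verts n" "a ?y = y" using y bij
      by (auto simp: bij_betw_def inv_into_into f_inv_into_f)
    have "{?x, ?y} \<in> Es \<longleftrightarrow> {a ?x, a ?y} \<in> Es" using a xi yi by (auto simp: stab_def)
    then show "{x, y} \<in> Es \<longleftrightarrow> {(\<lambda>x\<in>dgp_verts n. inv_into (dgp_verts n) a x) x, (\<lambda>x\<in>dgp_verts n. inv_into (dgp_verts n) a x) y} \<in> Es"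
      using x y xi yi by simp
  qed
next
  fix a b assume a: "a \<in> stab Es" and b: "b \<in> stab Es"
  then have aB: "a \<in> Bij (dgp_verts n)" and bB: "b \<in> Bij (dgp_verts n)" by (simp_all add: stab_def)
  have "a \<otimes>\<^bsub>BijGroup (dgp_verts n)\<^esub> b \<in> Bij (dgp_verts n)"
    using aB bB group.is_monoid[OF group_BijGroup] monoid.m_closed by fastforce
  moreover have "\<forall>x\<in>dgp_verts n. \<forall>y\<in>dgp_verts n. ({x,y} \<in> Es \<longleftrightarrow> {(a \<otimes>\<^bsub>BijGroup (dgp_verts n)\<^esub> b) x, (a \<otimes>\<^bsub>BijGroup (dgp_verts n)\<^esub> b) y} \<in> Es)"
  proof (intro ballI)
    fix x y assume x: "x \<in> dgp_verts n" and y: "y \<in> dgp_verts n"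
    have "b x \<in> dgp_verts n" "b y \<in> dgp_verts n" using Bij_in[OF bB x] Bij_in[OF bB y] by auto
    then show "({x,y} \<in> Es \<longleftrightarrow> {(a \<otimes>\<^bsub>BijGroup (dgp_verts n)\<^esub> b) x, (a \<otimes>\<^bsub>BijGroup (dgp_verts n)\<^esub> b) y} \<in> Es)"
      using a b x y aB bB by (simp add: mult_apply stab_def)
  qed
  ultimately show "a \<otimes>\<^bsub>BijGroup (dgp_verts n)\<^esub> b \<in> stab Es" by (simp add: stab_def)
qed

lemma edge_image_iff:
  assumes f: "f \<in> Bij (dgp_verts n)" and Es: "Es \<subseteq> pairsV"
  shows "edge_image f Es = Es \<longleftrightarrow> (\<forall>x\<in>dgp_verts n. \<forall>y\<in>dgp_verts n. {x,y} \<in> Es \<longleftrightarrow> {f x, f y} \<in> Es)"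
proof -
  have bij: "bij_betw f (dgp_verts n) (dgp_verts n)" using f by (simp add: Bij_def)
  then have inj: "inj_on f (dgp_verts n)" and surj: "f ` dgp_verts n = dgp_verts n"
    by (auto simp: bij_betw_def)
  show ?thesis
  proof
    assume eq: "edge_image f Es = Es"
    show "\<forall>x\<in>dgp_verts n. \<forall>y\<in>dgp_verts n. {x,y} \<in> Es \<longleftrightarrow> {f x, f y} \<in> Es"
    proof (intro ballI iffI)
      fix x y assume "x \<in> dgp_verts n" "y \<in> dgp_verts n" "{x,y} \<in> Es"
      then have "f ` {x,y} \<in> edge_image f Es" unfolding edge_image_def by blast
      then show "{f x, f y} \<in> Es" using eq by simp
    next
      fix x y assume xy: "x \<in> dgp_verts n" "y \<in> dgp_verts n" and "{f x, f y} \<in> Es"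
      then have "{f x, f y} \<in> edge_image f Es" using eq by simp
      then obtain e where e: "e \<in> Es" "f ` e = {f x, f y}" unfolding edge_image_def by auto
      then obtain a b where ab: "e = {a,b}" "a \<in> dgp_verts n" "b \<in> dgp_verts n"
        using Es unfolding pairsV_def by blast
      have im: "f ` {a,b} = f ` {x,y}" using e ab by simp
      have sub: "{a,b} \<subseteq> dgp_verts n" "{x,y} \<subseteq> dgp_verts n" using ab xy by auto
      have "{a,b} = {x,y}" using inj_on_image_eq_iff[OF inj sub] im by metis
      then have "e = {x,y}" using ab by simp
      then show "{x,y} \<in> Es" using e by simp
    qed
  next
    assume P: "\<forall>x\<in>dgp_verts n. \<forall>y\<in>dgp_verts n. {x,y} \<in> Es \<longleftrightarrow> {f x, f y} \<in> Es"
    show "edge_image f Es = Es"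
    proof (rule equalityI; rule subsetI)
      fix e assume "e \<in> edge_image f Es"
      then obtain e' where e': "e' \<in> Es" "e = f ` e'" unfolding edge_image_def by auto
      then obtain a b where ab: "e' = {a,b}" "a \<in> dgp_verts n" "b \<in> dgp_verts n"
        using Es unfolding pairsV_def by blast
      then show "e \<in> Es" using P e' by auto
    next
      fix e assume e: "e \<in> Es"
      then obtain a b where ab: "e = {a,b}" "a \<in> dgp_verts n" "b \<in> dgp_verts n"
        using Es unfolding pairsV_def by blast
      obtain a' where a': "a' \<in> dgp_verts n" "a = f a'" using ab surj by blast
      obtain b' where b': "b' \<in> dgp_verts n" "b = f b'" using ab surj by blast
      have "{a',b'} \<in> Es" using P a' b' e ab by auto
      moreover have "e = f ` {a',b'}" using ab a' b' by auto
      ultimately show "e \<in> edge_image f Es" unfolding edge_image_def by blast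
    qed
  qed
qed

lemma autA_eq: "autA n k = stab (dgp_edges n k)"
  by (simp add: autA_def stab_def)

lemma autB_eq: "autB n k = stab (dgp_edges n k) \<inter> stab (dgp_spokes n)"
proof (rule Set.set_eqI)
  fix f show "f \<in> autB n k \<longleftrightarrow> f \<in> stab (dgp_edges n k) \<inter> stab (dgp_spokes n)"
  proof (cases "f \<in> Bij (dgp_verts n)")
    case True
    then show ?thesis by (simp add: autB_def autA_eq stab_def edge_image_iff[OF True S_pairsV])
  next
    case False
    then show ?thesis by (simp add: autB_def autA_eq stab_def)
  qed
qed

lemma autC_eq: "autC n k = stab (dgp_edges n k) \<inter> stab (dgp_outer n) \<inter> stab (dgp_inner n k) \<inter> stab (dgp_spokes n)"
proof (rule Set.set_eqI)
  fix f show "f \<in> autC n k \<longleftrightarrow> f \<in> stab (dgp_edges n k) \<inter> stab (dgp_outer n) \<inter> stab (dgp_inner n k) \<inter> stab (dgp_spokes n)"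
  proof (cases "f \<in> Bij (dgp_verts n)")
    case True
    then show ?thesis by (simp add: autC_def autA_eq stab_def edge_image_iff[OF True S_pairsV]
      edge_image_iff[OF True O_pairsV] edge_image_iff[OF True I_pairsV] conj_ac)
  next
    case False
    then show ?thesis by (simp add: autC_def autA_eq stab_def)
  qed
qed

lemma autB_subgroup: "subgroup (autB n k) (BijGroup (dgp_verts n))"
  unfolding autB_eq by (intro subgroup_Int stab_subgroup)

lemma autC_subgroup: "subgroup (autC n k) (BijGroup (dgp_verts n))"
  unfolding autC_eq by (intro subgroup_Int stab_subgroup)

lemma C_sub_B: "autC n k \<subseteq> autB n k"
  unfolding autC_eq autB_eq by blast

lemma stab_fwd:
  assumes ext: "f \<in> extensional (dgp_verts n)" and inV: "\<And>x. x \<in> dgp_verts n \<Longrightarrow> f x \<in> dgp_verts n"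
    and inj: "inj_on f (dgp_verts n)" and Es: "Es \<subseteq> pairsV"
    and fwd: "\<And>x y. x \<in> dgp_verts n \<Longrightarrow> y \<in> dgp_verts n \<Longrightarrow> {x,y} \<in> Es \<Longrightarrow> {f x, f y} \<in> Es"
  shows "f \<in> stab Es"
proof -
  have surj: "f ` dgp_verts n = dgp_verts n"
    using endo_inj_surj[OF finite_V _ inj] inV by blast
  have fB: "f \<in> Bij (dgp_verts n)"
    using ext inj surj by (simp add: Bij_def bij_betw_def)
  have EsP: "Es \<subseteq> Pow (dgp_verts n)" using Es unfolding pairsV_def by auto
  have finEs: "finite Es" using EsP finite_V by (meson finite_Pow_iff finite_subset)
  have sub: "(\<lambda>e. f ` e) ` Es \<subseteq> Es"
  proof
    fix e assume "e \<in> (\<lambda>e. f ` e) ` Es"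
    then obtain e' where e': "e' \<in> Es" "e = f ` e'" by auto
    then obtain a b where ab: "e' = {a,b}" "a \<in> dgp_verts n" "b \<in> dgp_verts n"
      using Es unfolding pairsV_def by blast
    then show "e \<in> Es" using fwd e' by auto
  qed
  have injEs: "inj_on (\<lambda>e. f ` e) Es"
  proof (rule inj_onI)
    fix e1 e2 assume "e1 \<in> Es" "e2 \<in> Es" "f ` e1 = f ` e2"
    moreover have "e1 \<subseteq> dgp_verts n" "e2 \<subseteq> dgp_verts n" using EsP \<open>e1 \<in> Es\<close> \<open>e2 \<in> Es\<close> by auto
    ultimately show "e1 = e2" using inj_on_image_eq_iff[OF inj] by metis
  qed
  have eq: "(\<lambda>e. f ` e) ` Es = Es"
    using card_subset_eq[OF finEs sub] card_image[OF injEs] by simp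
  then have "edge_image f Es = Es" by (simp add: edge_image_def)
  then show ?thesis using edge_image_iff[OF fB Es] fB by (simp add: stab_def)
qed

lemma stab_E_fwd:
  assumes ext: "f \<in> extensional (dgp_verts n)" and inV: "\<And>x. x \<in> dgp_verts n \<Longrightarrow> f x \<in> dgp_verts n"
    and inj: "inj_on f (dgp_verts n)"
    and fO: "\<And>x y. {x,y} \<in> dgp_outer n \<Longrightarrow> {f x, f y} \<in> dgp_edges n k"
    and fS: "\<And>x y. {x,y} \<in> dgp_spokes n \<Longrightarrow> {f x, f y} \<in> dgp_edges n k"
    and fI: "\<And>x y. {x,y} \<in> dgp_inner n k \<Longrightarrow> {f x, f y} \<in> dgp_edges n k"
  shows "f \<in> stab (dgp_edges n k)"
  using stab_fwd[OF ext inV inj E_pairsV] fO fS fI E_split by blast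


lemma mod_n_mod2: "(m mod n) mod 2 = m mod 2"
  using n_even by (simp add: mod_mod_cancel)

lemma par_mod_n: "even (m mod n + j) \<longleftrightarrow> even (m + j)"
proof -
  have "even (m mod n) \<longleftrightarrow> even m" using mod_n_mod2[of m]
    by (metis dvd_eq_mod_eq_0)
  then show ?thesis by simp
qed

lemma mod2_eqI: "even (a - b) \<Longrightarrow> (a::int) mod 2 = b mod 2"
  by (simp add: mod_eq_dvd_iff)

lemma modn_eqI: "n dvd (a - b) \<Longrightarrow> a mod n = b mod n"
  by (simp add: mod_eq_dvd_iff)

lemma dvd_mod_diff: "n dvd (m mod n - m)"
  by (metis mod_mod_trivial mod_eq_dvd_iff)

lemma rho_U: "rho n (U m e) = U (m+1) (e+1)"
proof -
  have "rho n (U m e) = (case U m e of Uv i j \<Rightarrow> Uv ((i+1) mod n) j | Vv i j \<Rightarrow> Vv ((i+1) mod n) j)"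
    by (simp add: rho_def)
  also have "\<dots> = U (m+1) (e+1)"
    unfolding U_def by (simp add: mod_add_left_eq mod2_eqI)
  finally show ?thesis .
qed

lemma rho_W: "rho n (W m e) = W (m+1) (e+1)"
proof -
  have "rho n (W m e) = (case W m e of Uv i j \<Rightarrow> Uv ((i+1) mod n) j | Vv i j \<Rightarrow> Vv ((i+1) mod n) j)"
    by (simp add: rho_def)
  also have "\<dots> = W (m+1) (e+1)"
    unfolding W_def by (simp add: mod_add_left_eq mod2_eqI)
  finally show ?thesis .
qed

lemma delta_U: "delta n (U m e) = U (-m) e"
proof -
  have "delta n (U m e) = (case U m e of Uv i j \<Rightarrow> Uv ((- i) mod n) j | Vv i j \<Rightarrow> Vv ((- i) mod n) j)"
    by (simp add: delta_def)
  also have "\<dots> = U (-m) e"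
    unfolding U_def by (simp add: mod_minus_eq mod2_eqI)
  finally show ?thesis .
qed

lemma delta_W: "delta n (W m e) = W (-m) e"
proof -
  have "delta n (W m e) = (case W m e of Uv i j \<Rightarrow> Uv ((- i) mod n) j | Vv i j \<Rightarrow> Vv ((- i) mod n) j)"
    by (simp add: delta_def)
  also have "\<dots> = W (-m) e"
    unfolding W_def by (simp add: mod_minus_eq mod2_eqI)
  finally show ?thesis .
qed

lemma beta_U: "beta n (U m e) = U m (e+1)"
proof -
  have "beta n (U m e) = (case U m e of Uv i j \<Rightarrow> Uv i (1-j) | Vv i j \<Rightarrow> Vv i (1-j))"
    by (simp add: beta_def)
  also have "\<dots> = U m (e+1)"
    unfolding U_def by simp presburger
  finally show ?thesis .
qed

lemma beta_W: "beta n (W m e) = W m (e+1)"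
proof -
  have "beta n (W m e) = (case W m e of Uv i j \<Rightarrow> Uv i (1-j) | Vv i j \<Rightarrow> Vv i (1-j))"
    by (simp add: beta_def)
  also have "\<dots> = W m (e+1)"
    unfolding W_def by simp presburger
  finally show ?thesis .
qed


lemma inj_crit:
  assumes uu: "\<And>m e m' e'. F (U m e) = F (U m' e') \<Longrightarrow> U m e = U m' e'"
    and ww: "\<And>m e m' e'. F (W m e) = F (W m' e') \<Longrightarrow> W m e = W m' e'"
    and uw: "\<And>m e m' e'. F (U m e) \<noteq> F (W m' e')"
  shows "inj_on F (dgp_verts n)"
proof (rule inj_onI)
  fix x y assume x: "x \<in> dgp_verts n" and y: "y \<in> dgp_verts n" and eq: "F x = F y"
  from vert_UW[OF x] vert_UW[OF y] eq show "x = y"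
    using uu ww uw by (metis)
qed

lemma fwdO: "(\<And>m e. {F (U m e), F (U (m+1) e)} \<in> Y) \<Longrightarrow> {x,y} \<in> dgp_outer n \<Longrightarrow> {F x, F y} \<in> Y"
proof -
  assume h: "\<And>m e. {F (U m e), F (U (m+1) e)} \<in> Y" and "{x,y} \<in> dgp_outer n"
  then obtain m e where "{x,y} = {U m e, U (m+1) e}" unfolding O_char by blast
  then have "{F x, F y} = {F (U m e), F (U (m+1) e)}" by (auto simp: doubleton_eq_iff)
  then show ?thesis using h by simp
qed

lemma fwdS: "(\<And>m e. {F (U m e), F (W m (e+1))} \<in> Y) \<Longrightarrow> {x,y} \<in> dgp_spokes n \<Longrightarrow> {F x, F y} \<in> Y"
proof -
  assume h: "\<And>m e. {F (U m e), F (W m (e+1))} \<in> Y" and "{x,y} \<in> dgp_spokes n"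
  then obtain m e where "{x,y} = {U m e, W m (e+1)}" unfolding S_char by blast
  then have "{F x, F y} = {F (U m e), F (W m (e+1))}" by (auto simp: doubleton_eq_iff)
  then show ?thesis using h by simp
qed

lemma fwdI: "(\<And>m e. {F (W m e), F (W (m+k) (e+1))} \<in> Y) \<Longrightarrow> {x,y} \<in> dgp_inner n k \<Longrightarrow> {F x, F y} \<in> Y"
proof -
  assume h: "\<And>m e. {F (W m e), F (W (m+k) (e+1))} \<in> Y" and "{x,y} \<in> dgp_inner n k"
  then obtain m e where "{x,y} = {W m e, W (m+k) (e+1)}" unfolding I_char by blast
  then have "{F x, F y} = {F (W m e), F (W (m+k) (e+1))}" by (auto simp: doubleton_eq_iff)
  then show ?thesis using h by simp
qed

lemma inC:
  assumes ext: "F \<in> extensional (dgp_verts n)"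
    and inU: "\<And>m e. F (U m e) \<in> dgp_verts n" and inW: "\<And>m e. F (W m e) \<in> dgp_verts n"
    and inj: "inj_on F (dgp_verts n)"
    and hO: "\<And>m e. {F (U m e), F (U (m+1) e)} \<in> dgp_outer n"
    and hS: "\<And>m e. {F (U m e), F (W m (e+1))} \<in> dgp_spokes n"
    and hI: "\<And>m e. {F (W m e), F (W (m+k) (e+1))} \<in> dgp_inner n k"
  shows "F \<in> autC n k"
proof -
  have inV: "\<And>x. x \<in> dgp_verts n \<Longrightarrow> F x \<in> dgp_verts n"
    using vert_UW inU inW by blast
  have "F \<in> stab (dgp_edges n k)"
    by (rule stab_E_fwd[of F, OF ext inV inj]) (auto simp: dgp_edges_def dest: fwdO[OF hO] fwdS[OF hS] fwdI[OF hI])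
  moreover have "F \<in> stab (dgp_outer n)"
    using stab_fwd[of F, OF ext inV inj O_pairsV] fwdO[OF hO] by blast
  moreover have "F \<in> stab (dgp_inner n k)"
    using stab_fwd[of F, OF ext inV inj I_pairsV] fwdI[OF hI] by blast
  moreover have "F \<in> stab (dgp_spokes n)"
    using stab_fwd[of F, OF ext inV inj S_pairsV] fwdS[OF hS] by blast
  ultimately show ?thesis unfolding autC_eq by blast
qed

lemma inB:
  assumes ext: "F \<in> extensional (dgp_verts n)"
    and inU: "\<And>m e. F (U m e) \<in> dgp_verts n" and inW: "\<And>m e. F (W m e) \<in> dgp_verts n"
    and inj: "inj_on F (dgp_verts n)"
    and hO: "\<And>m e. {F (U m e), F (U (m+1) e)} \<in> dgp_inner n k"
    and hS: "\<And>m e. {F (U m e), F (W m (e+1))} \<in> dgp_spokes n"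
    and hI: "\<And>m e. {F (W m e), F (W (m+k) (e+1))} \<in> dgp_outer n"
  shows "F \<in> autB n k"
proof -
  have inV: "\<And>x. x \<in> dgp_verts n \<Longrightarrow> F x \<in> dgp_verts n"
    using vert_UW inU inW by blast
  have "F \<in> stab (dgp_edges n k)"
    by (rule stab_E_fwd[of F, OF ext inV inj]) (auto simp: dgp_edges_def dest: fwdO[OF hO] fwdS[OF hS] fwdI[OF hI])
  moreover have "F \<in> stab (dgp_spokes n)"
    using stab_fwd[of F, OF ext inV inj S_pairsV] fwdS[OF hS] by blast
  ultimately show ?thesis unfolding autB_eq by blast
qed

lemma rho_C: "rho n \<in> autC n k"
proof (rule inC)
  show "rho n \<in> extensional (dgp_verts n)" by (simp add: rho_def)
  show "inj_on (rho n) (dgp_verts n)"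
    by (rule inj_crit) (auto simp: rho_U rho_W U_eq W_eq)
qed (simp_all add: rho_U rho_W nbrO_U nbrS_U nbrI_W algebra_simps)

lemma delta_C: "delta n \<in> autC n k"
proof (rule inC)
  show "delta n \<in> extensional (dgp_verts n)" by (simp add: delta_def)
  show "inj_on (delta n) (dgp_verts n)"
  proof (rule inj_crit)
    fix m e m' e' assume "delta n (U m e) = delta n (U m' e')"
    then have d1: "n dvd (- m - - m')" and d2: "even (e - e')" by (simp_all add: delta_U U_eq)
    show "U m e = U m' e'" by (intro U_eqI d2 dvd_by[OF d1, where cc="-1" and dd=0]) simp
  next
    fix m e m' e' assume "delta n (W m e) = delta n (W m' e')"
    then have d1: "n dvd (- m - - m')" and d2: "even (e - e')" by (simp_all add: delta_W W_eq)
    show "W m e = W m' e'" by (intro W_eqI d2 dvd_by[OF d1, where cc="-1" and dd=0]) simp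
  qed (simp add: delta_U delta_W)
qed (simp_all add: delta_U delta_W nbrO_U nbrS_U nbrI_W U_eq W_eq algebra_simps)

lemma beta_C: "beta n \<in> autC n k"
proof (rule inC)
  show "beta n \<in> extensional (dgp_verts n)" by (simp add: beta_def)
  show "inj_on (beta n) (dgp_verts n)"
    by (rule inj_crit) (auto simp: beta_U beta_W U_eq W_eq)
qed (simp_all add: beta_U beta_W nbrO_U nbrS_U nbrI_W)


definition Lam :: "int \<Rightarrow> dvert \<Rightarrow> dvert" where
  "Lam s = restrict (\<lambda>x. case x of
       Uv i j \<Rightarrow> (if odd (i+j) then Vv ((s + (i-k)*k) mod n) j else Vv ((i*k) mod n) j)
     | Vv i j \<Rightarrow> (if odd (i+j) then Uv ((i*k) mod n) j else Uv ((s + (i-k)*k) mod n) j))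
     (dgp_verts n)"

lemma lam_Lam: "lam n k = Lam 1" by (simp add: lam_def Lam_def)
lemma tau_Lam: "tau n k = Lam (-1)" by (simp add: tau_def Lam_def)

lemma modn_aux: "(s + (m mod n - k) * k) mod n = (s + (m - k) * k) mod n"
proof (rule modn_eqI)
  show "n dvd (s + (m mod n - k) * k - (s + (m - k) * k))"
    by (rule dvd_by[OF dvd_mod_diff[of m], where cc=k and dd=0]) (simp add: algebra_simps)
qed

lemma Lam_U: "odd s \<Longrightarrow> Lam s (U m e) = (if even e then W (m*k) m else W (s + (m-k)*k) m)"
proof -
  assume s: "odd s"
  have "Lam s (U m e) = (case U m e of
       Uv i j \<Rightarrow> (if odd (i+j) then Vv ((s + (i-k)*k) mod n) j else Vv ((i*k) mod n) j)
     | Vv i j \<Rightarrow> (if odd (i+j) then Uv ((i*k) mod n) j else Uv ((s + (i-k)*k) mod n) j))"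
    by (simp add: Lam_def)
  also have "\<dots> = (if odd (m mod n + (m+e) mod 2) then Vv ((s + (m mod n - k)*k) mod n) ((m+e) mod 2)
                     else Vv ((m mod n * k) mod n) ((m+e) mod 2))"
    by (simp add: U_def)
  also have "\<dots> = (if even e then W (m*k) m else W (s + (m-k)*k) m)"
  proof -
    have p: "odd (m mod n + (m+e) mod 2) \<longleftrightarrow> odd e" using par_mod_n[of m "(m+e) mod 2"]
      by (cases "even m"; cases "even e"; simp)
    show ?thesis
      unfolding p W_def using s k_even
      by (auto simp: mod_mult_left_eq modn_aux intro!: mod2_eqI)
  qed
  finally show ?thesis .
qed

lemma Lam_W: "odd s \<Longrightarrow> Lam s (W m e) = (if even e then U (s + (m-k)*k) (m+1) else U (m*k) (m+1))"
proof -
  assume s: "odd s"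
  have "Lam s (W m e) = (case W m e of
       Uv i j \<Rightarrow> (if odd (i+j) then Vv ((s + (i-k)*k) mod n) j else Vv ((i*k) mod n) j)
     | Vv i j \<Rightarrow> (if odd (i+j) then Uv ((i*k) mod n) j else Uv ((s + (i-k)*k) mod n) j))"
    by (simp add: Lam_def)
  also have "\<dots> = (if odd (m mod n + (m+e) mod 2) then Uv ((m mod n * k) mod n) ((m+e) mod 2)
                     else Uv ((s + (m mod n - k)*k) mod n) ((m+e) mod 2))"
    by (simp add: W_def)
  also have "\<dots> = (if even e then U (s + (m-k)*k) (m+1) else U (m*k) (m+1))"
  proof -
    have p: "odd (m mod n + (m+e) mod 2) \<longleftrightarrow> odd e" using par_mod_n[of m "(m+e) mod 2"]
      by (cases "even m"; cases "even e"; simp)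
    show ?thesis
      unfolding p U_def using s k_even
      by (auto simp: mod_mult_left_eq modn_aux intro!: mod2_eqI)
  qed
  finally show ?thesis .
qed


lemma n_half: "n = 2 * (n div 2)" using n_even by simp

lemma s_odd: "s \<in> {1,-1} \<Longrightarrow> odd (s::int)" by auto

lemma half_odd:
  assumes s: "s \<in> {1,-1}" and hd: "(n div 2) dvd (k^2 - s)"
  shows "odd (n div 2)"
proof
  assume "even (n div 2)"
  then have "even (k^2 - s)" using hd by (meson dvd_trans)
  moreover have "odd (k^2 - s)" using s k_even by auto
  ultimately show False by simp
qed

lemma key_inj:
  assumes s: "s \<in> {1,-1}" and hd: "(n div 2) dvd (k^2 - s)" and d1: "n dvd d*k" and d2: "even d"
  shows "n dvd d"
proof -
  let ?h = "n div 2"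
  have hn: "?h dvd n" using n_half by (metis dvd_triv_right)
  have "?h dvd d*k*k" using dvd_trans[OF hn d1] by simp
  moreover have "?h dvd d*(k^2 - s)" using hd by simp
  ultimately have "?h dvd d*k*k - d*(k^2 - s)" by (rule dvd_diff)
  moreover have "d*k*k - d*(k^2 - s) = d*s" by (simp add: power2_eq_square algebra_simps)
  ultimately have "?h dvd d*s" by simp
  then have hd2: "?h dvd d" using s by auto
  have "coprime 2 ?h" using half_odd[OF s hd] by simp
  then have "2 * ?h dvd d" using d2 hd2 by (simp add: divides_mult)
  then show ?thesis using n_half by simp
qed

lemma dvd_2k2:
  assumes hd: "(n div 2) dvd (k^2 - s)"
  shows "n dvd (2*k^2 - 2*s)"
proof -
  have "2 * (n div 2) dvd 2 * (k^2 - s)" using hd by (rule mult_dvd_mono[OF dvd_refl])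
  then show ?thesis using n_half by (simp add: algebra_simps)
qed

lemma O_by_s: "s \<in> {1,-1} \<Longrightarrow> y = U (x+s) e \<Longrightarrow> {U x e, y} \<in> dgp_outer n"
  by (auto simp: nbrO_U)

lemma Lam_B:
  assumes s: "s \<in> {1,-1}" and hd: "(n div 2) dvd (k^2 - s)"
  shows "Lam s \<in> autB n k"
proof (rule inB)
  have so: "odd s" using s by auto
  show "Lam s \<in> extensional (dgp_verts n)" by (simp add: Lam_def)
  show "\<And>m e. Lam s (U m e) \<in> dgp_verts n" by (simp add: Lam_U[OF so])
  show "\<And>m e. Lam s (W m e) \<in> dgp_verts n" by (simp add: Lam_W[OF so])
  show "inj_on (Lam s) (dgp_verts n)"
  proof (rule inj_crit)
    fix m e m' e' assume eq: "Lam s (U m e) = Lam s (U m' e')"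
    show "U m e = U m' e'"
    proof (cases "even e"; cases "even e'")
      assume "even e" "even e'"
      then have "W (m*k) m = W (m'*k) m'" using eq by (simp add: Lam_U[OF so])
      then have d1: "n dvd (m*k - m'*k)" and d2: "even (m - m')" by (simp_all add: W_eq)
      have "n dvd (m - m')" using key_inj[OF s hd _ d2] d1 by (simp add: algebra_simps)
      then show ?thesis using \<open>even e\<close> \<open>even e'\<close> by (simp add: U_eq)
    next
      assume "odd e" "odd e'"
      then have "W (s + (m-k)*k) m = W (s + (m'-k)*k) m'" using eq by (simp add: Lam_U[OF so])
      then have d1: "n dvd (s + (m-k)*k - (s + (m'-k)*k))" and d2: "even (m - m')" by (simp_all add: W_eq)
      have "n dvd (m - m')" using key_inj[OF s hd _ d2] d1 by (simp add: algebra_simps)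
      then show ?thesis using \<open>odd e\<close> \<open>odd e'\<close> by (simp add: U_eq)
    next
      assume "even e" "odd e'"
      then have "W (m*k) m = W (s + (m'-k)*k) m'" using eq by (simp add: Lam_U[OF so])
      then have "n dvd (m*k - (s + (m'-k)*k))" by (simp add: W_eq)
      then have "even (m*k - (s + (m'-k)*k))" using n_even by (meson dvd_trans)
      then show ?thesis using so k_even by simp
    next
      assume "odd e" "even e'"
      then have "W (s + (m-k)*k) m = W (m'*k) m'" using eq by (simp add: Lam_U[OF so])
      then have "n dvd (s + (m-k)*k - m'*k)" by (simp add: W_eq)
      then have "even (s + (m-k)*k - m'*k)" using n_even by (meson dvd_trans)
      then show ?thesis using so k_even by simp
    qed
  next
    fix m e m' e' assume eq: "Lam s (W m e) = Lam s (W m' e')"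
    show "W m e = W m' e'"
    proof (cases "even e"; cases "even e'")
      assume "odd e" "odd e'"
      then have "U (m*k) (m+1) = U (m'*k) (m'+1)" using eq by (simp add: Lam_W[OF so])
      then have d1: "n dvd (m*k - m'*k)" and d2: "even (m - m')" by (simp_all add: U_eq)
      have "n dvd (m - m')" using key_inj[OF s hd _ d2] d1 by (simp add: algebra_simps)
      then show ?thesis using \<open>odd e\<close> \<open>odd e'\<close> by (simp add: W_eq)
    next
      assume "even e" "even e'"
      then have "U (s + (m-k)*k) (m+1) = U (s + (m'-k)*k) (m'+1)" using eq by (simp add: Lam_W[OF so])
      then have d1: "n dvd (s + (m-k)*k - (s + (m'-k)*k))" and d2: "even (m - m')" by (simp_all add: U_eq)
      have "n dvd (m - m')" using key_inj[OF s hd _ d2] d1 by (simp add: algebra_simps)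
      then show ?thesis using \<open>even e\<close> \<open>even e'\<close> by (simp add: W_eq)
    next
      assume "odd e" "even e'"
      then have "U (m*k) (m+1) = U (s + (m'-k)*k) (m'+1)" using eq by (simp add: Lam_W[OF so])
      then have "n dvd (m*k - (s + (m'-k)*k))" by (simp add: U_eq)
      then have "even (m*k - (s + (m'-k)*k))" using n_even by (meson dvd_trans)
      then show ?thesis using so k_even by simp
    next
      assume "even e" "odd e'"
      then have "U (s + (m-k)*k) (m+1) = U (m'*k) (m'+1)" using eq by (simp add: Lam_W[OF so])
      then have "n dvd (s + (m-k)*k - m'*k)" by (simp add: U_eq)
      then have "even (s + (m-k)*k - m'*k)" using n_even by (meson dvd_trans)
      then show ?thesis using so k_even by simp
    qed
  next
    fix m e m' e'
    show "Lam s (U m e) \<noteq> Lam s (W m' e')" by (simp add: Lam_U[OF so] Lam_W[OF so])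
  qed
  show "\<And>m e. {Lam s (U m e), Lam s (U (m+1) e)} \<in> dgp_inner n k"
  proof -
    fix m e
    show "{Lam s (U m e), Lam s (U (m+1) e)} \<in> dgp_inner n k"
    proof (cases "even e")
      case True
      have "W ((m+1)*k) (m+1) = W (m*k + k) (m+1)" by (rule W_eqI) (simp_all add: algebra_simps)
      then show ?thesis using True by (simp add: Lam_U[OF so] nbrI_W)
    next
      case False
      have "W (s + (m+1-k)*k) (m+1) = W (s + (m-k)*k + k) (m+1)" by (rule W_eqI) (simp_all add: algebra_simps)
      then show ?thesis using False by (simp add: Lam_U[OF so] nbrI_W)
    qed
  qed
  show "\<And>m e. {Lam s (U m e), Lam s (W m (e+1))} \<in> dgp_spokes n"
    by (simp add: Lam_U[OF so] Lam_W[OF so] nbrS_W)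
  show "\<And>m e. {Lam s (W m e), Lam s (W (m+k) (e+1))} \<in> dgp_outer n"
  proof -
    fix m e
    show "{Lam s (W m e), Lam s (W (m+k) (e+1))} \<in> dgp_outer n"
    proof (cases "even e")
      case True
      have "U ((m+k)*k) (m+k+1) = U (s + (m-k)*k + s) (m+1)"
      proof (rule U_eqI)
        show "n dvd ((m+k)*k - (s + (m-k)*k + s))"
          by (rule dvd_by[OF dvd_2k2[OF hd], where cc=1 and dd=0]) (simp add: algebra_simps power2_eq_square)
        show "even (m+k+1 - (m+1))" using k_even by simp
      qed
      then have "{U (s + (m-k)*k) (m+1), U ((m+k)*k) (m+k+1)} \<in> dgp_outer n"
        by (rule O_by_s[OF s])
      then show ?thesis using True by (simp add: Lam_W[OF so])
    next
      case False
      have "U (s + (m+k-k)*k) (m+k+1) = U (m*k + s) (m+1)"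
        by (rule U_eqI) (use k_even in \<open>simp_all add: algebra_simps\<close>)
      then show ?thesis using False O_by_s[OF s] by (simp add: Lam_W[OF so])
    qed
  qed
qed


lemma edge_in_V: "{x,y} \<in> Es \<Longrightarrow> Es \<subseteq> pairsV \<Longrightarrow> x \<in> dgp_verts n \<and> y \<in> dgp_verts n"
  unfolding pairsV_def by (auto simp: doubleton_eq_iff)

lemma E_UU: "{x,y} \<in> dgp_edges n k \<Longrightarrow> isU x \<Longrightarrow> isU y \<Longrightarrow> {x,y} \<in> dgp_outer n"
  using E_split S_type I_type by blast
lemma E_WW: "{x,y} \<in> dgp_edges n k \<Longrightarrow> \<not> isU x \<Longrightarrow> \<not> isU y \<Longrightarrow> {x,y} \<in> dgp_inner n k"
  using E_split S_type O_type by blast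
lemma E_UW: "{x,y} \<in> dgp_edges n k \<Longrightarrow> isU x \<noteq> isU y \<Longrightarrow> {x,y} \<in> dgp_spokes n"
  using E_split O_type I_type by blast

lemma O_E: "{x,y} \<in> dgp_outer n \<Longrightarrow> {x,y} \<in> dgp_edges n k" by (simp add: dgp_edges_def)
lemma S_E: "{x,y} \<in> dgp_spokes n \<Longrightarrow> {x,y} \<in> dgp_edges n k" by (simp add: dgp_edges_def)
lemma I_E: "{x,y} \<in> dgp_inner n k \<Longrightarrow> {x,y} \<in> dgp_edges n k" by (simp add: dgp_edges_def)

lemma stab_app: "f \<in> stab Es \<Longrightarrow> Es \<subseteq> pairsV \<Longrightarrow> {x,y} \<in> Es \<Longrightarrow> {f x, f y} \<in> Es"
  using edge_in_V by (auto simp: stab_def)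

lemma stab_app_rev: "f \<in> stab Es \<Longrightarrow> x \<in> dgp_verts n \<Longrightarrow> y \<in> dgp_verts n \<Longrightarrow> {f x, f y} \<in> Es \<Longrightarrow> {x,y} \<in> Es"
  by (auto simp: stab_def)

lemma stab_Bij: "f \<in> stab Es \<Longrightarrow> f \<in> Bij (dgp_verts n)" by (simp add: stab_def)

lemma connected_const:
  assumes Q: "\<And>x y. x \<in> dgp_verts n \<Longrightarrow> y \<in> dgp_verts n \<Longrightarrow> {x,y} \<in> dgp_edges n k \<Longrightarrow> Q x = Q y"
    and x: "x \<in> dgp_verts n"
  shows "Q x = Q (U 0 0)"
proof -
  have QU: "Q (U m 0) = Q (U 0 0)" for m
  proof (induction m rule: int_induct[where k=0])
    case base then show ?case by simp
  next
    case (step1 i)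
    have "{U i 0, U (i+1) 0} \<in> dgp_edges n k" by (intro O_E) (simp add: nbrO_U)
    note ee = this
    show ?case using Q[OF U_in U_in ee] step1 by simp
  next
    case (step2 i)
    have "{U i 0, U (i-1) 0} \<in> dgp_edges n k" by (intro O_E) (simp add: nbrO_U)
    note ee = this
    show ?case using Q[OF U_in U_in ee] step2 by simp
  qed
  have QW1: "Q (W m 1) = Q (U 0 0)" for m
  proof -
    have "{U m 0, W m 1} \<in> dgp_edges n k" by (intro S_E) (simp add: nbrS_U)
    note ee = this
    show ?thesis using Q[OF U_in W_in ee] QU[of m] by simp
  qed
  have QW0: "Q (W m 0) = Q (U 0 0)" for m
  proof -
    have "{W m 0, W (m+k) 1} \<in> dgp_edges n k" by (intro I_E) (simp add: nbrI_W)
    note ee = this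
    show ?thesis using Q[OF W_in W_in ee] QW1[of "m+k"] by simp
  qed
  have QU1: "Q (U m 1) = Q (U 0 0)" for m
  proof -
    have "W m 0 = W m (1+1)" by (simp add: W_eq)
    then have ee: "{U m 1, W m 0} \<in> dgp_edges n k" by (intro S_E) (simp add: nbrS_U)
    show ?thesis using Q[OF U_in W_in ee] QW0[of m] by simp
  qed
  from x show ?thesis
  proof (rule vert_cases)
    fix m assume "x = U m 0" then show ?thesis using QU[of m] by simp
  next
    fix m assume "x = U m 1" then show ?thesis using QU1[of m] by simp
  next
    fix m assume "x = W m 0" then show ?thesis using QW0[of m] by simp
  next
    fix m assume "x = W m 1" then show ?thesis using QW1[of m] by simp
  qed
qed

lemma B_side:
  assumes f: "f \<in> autB n k"
  shows "(\<forall>x\<in>dgp_verts n. isU (f x) = isU x) \<or> (\<forall>x\<in>dgp_verts n. isU (f x) \<noteq> isU x)"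
proof -
  have fE: "f \<in> stab (dgp_edges n k)" and fS: "f \<in> stab (dgp_spokes n)" using f by (auto simp: autB_eq)
  have inv: "(isU (f x) = isU x) = (isU (f y) = isU y)"
    if x: "x \<in> dgp_verts n" and y: "y \<in> dgp_verts n" and e: "{x,y} \<in> dgp_edges n k" for x y
  proof (cases "{x,y} \<in> dgp_spokes n")
    case True
    then have "{f x, f y} \<in> dgp_spokes n" using stab_app[OF fS S_pairsV] by blast
    then show ?thesis using True S_type by blast
  next
    case False
    then have "{f x, f y} \<notin> dgp_spokes n" using stab_app_rev[OF fS x y] by blast
    moreover have "{f x, f y} \<in> dgp_edges n k" using stab_app[OF fE E_pairsV e] .
    ultimately have "isU (f x) = isU (f y)" using E_UW by blast
    moreover have "isU x = isU y" using False e E_UW by blast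
    ultimately show ?thesis by simp
  qed
  have "\<forall>x\<in>dgp_verts n. (isU (f x) = isU x) = (isU (f (U 0 0)) = isU (U 0 0))"
    using connected_const[of "\<lambda>x. isU (f x) = isU x"] inv by blast
  then show ?thesis by (cases "isU (f (U 0 0)) = isU (U 0 0)") auto
qed

lemma B_pres_C:
  assumes f: "f \<in> autB n k" and pres: "\<forall>x\<in>dgp_verts n. isU (f x) = isU x"
  shows "f \<in> autC n k"
proof -
  have fE: "f \<in> stab (dgp_edges n k)" and fS: "f \<in> stab (dgp_spokes n)" using f by (auto simp: autB_eq)
  have fB: "f \<in> Bij (dgp_verts n)" using stab_Bij[OF fE] .
  have inV: "f x \<in> dgp_verts n" if "x \<in> dgp_verts n" for x using Bij_in[OF fB that] .
  have "f \<in> stab (dgp_outer n)"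
    unfolding stab_def
  proof (intro CollectI conjI fB ballI iffI)
    fix x y assume x: "x \<in> dgp_verts n" and y: "y \<in> dgp_verts n" and e: "{x,y} \<in> dgp_outer n"
    have "{f x, f y} \<in> dgp_edges n k" using stab_app[OF fE E_pairsV O_E[OF e]] .
    then show "{f x, f y} \<in> dgp_outer n" using E_UU O_type[OF e] pres x y by metis
  next
    fix x y assume x: "x \<in> dgp_verts n" and y: "y \<in> dgp_verts n" and e: "{f x, f y} \<in> dgp_outer n"
    have "{x, y} \<in> dgp_edges n k" using stab_app_rev[OF fE x y O_E[OF e]] .
    then show "{x, y} \<in> dgp_outer n" using E_UU O_type[OF e] pres x y by metis
  qed
  moreover have "f \<in> stab (dgp_inner n k)"
    unfolding stab_def
  proof (intro CollectI conjI fB ballI iffI)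
    fix x y assume x: "x \<in> dgp_verts n" and y: "y \<in> dgp_verts n" and e: "{x,y} \<in> dgp_inner n k"
    have "{f x, f y} \<in> dgp_edges n k" using stab_app[OF fE E_pairsV I_E[OF e]] .
    then show "{f x, f y} \<in> dgp_inner n k" using E_WW I_type[OF e] pres x y by metis
  next
    fix x y assume x: "x \<in> dgp_verts n" and y: "y \<in> dgp_verts n" and e: "{f x, f y} \<in> dgp_inner n k"
    have "{x, y} \<in> dgp_edges n k" using stab_app_rev[OF fE x y I_E[OF e]] .
    then show "{x, y} \<in> dgp_inner n k" using E_WW I_type[OF e] pres x y by metis
  qed
  ultimately show ?thesis using fE fS unfolding autC_eq by blast
qed

lemma C_pres:
  assumes f: "f \<in> autC n k"
  shows "isU (f (U 0 0))"
proof -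
  have fO: "f \<in> stab (dgp_outer n)" using f by (auto simp: autC_eq)
  have "{U 0 0, U 1 0} \<in> dgp_outer n" by (simp add: nbrO_U)
  then have "{f (U 0 0), f (U 1 0)} \<in> dgp_outer n" using stab_app[OF fO O_pairsV] by blast
  then show ?thesis using O_type by blast
qed

lemma Lam_notC: "s \<in> {1,-1} \<Longrightarrow> Lam s \<notin> autC n k"
  using C_pres[of "Lam s"] Lam_U[of s 0 0] by auto

lemma path_nat:
  assumes nb: "\<And>x y. {P x, y} \<in> R \<Longrightarrow> y = P (x+1) \<or> y = P (x-1)"
    and E: "\<And>m. {g m, g (m+1)} \<in> R" and D: "\<And>m. g (m+1) \<noteq> g (m-1)"
    and g0: "g 0 = P 0" and g1: "g 1 = P 1"
  shows "g (int j) = P (int j) \<and> g (int j + 1) = P (int j + 1)"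
proof (induction j)
  case 0 then show ?case using g0 g1 by simp
next
  case (Suc j)
  have "{P (int j + 1), g (int j + 1 + 1)} \<in> R" using E[of "int j + 1"] Suc by simp
  then have "g (int j + 1 + 1) = P (int j + 1 + 1) \<or> g (int j + 1 + 1) = P (int j + 1 - 1)" by (rule nb)
  moreover have "g (int j + 1 + 1) \<noteq> P (int j)" using D[of "int j + 1"] Suc by simp
  ultimately have "g (int j + 1 + 1) = P (int j + 1 + 1)" by auto
  moreover have eq: "int (Suc j) = int j + 1" by simp
  ultimately show ?case unfolding eq using Suc by blast
qed

lemma path_gen:
  assumes nb: "\<And>x y. {P x, y} \<in> R \<Longrightarrow> y = P (x+1) \<or> y = P (x-1)"
    and E: "\<And>m. {g m, g (m+1)} \<in> R" and D: "\<And>m. g (m+1) \<noteq> g (m-1)"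
    and g0: "g 0 = P 0" and g1: "g 1 = P 1"
  shows "g (m::int) = P m"
proof (cases "m \<ge> 0")
  case True
  then obtain j where "m = int j" by (metis nonneg_int_cases)
  then show ?thesis using path_nat[OF nb E D g0 g1, of j] by simp
next
  case False
  then obtain j where mj: "m = - int j" by (metis nle_le nonpos_int_cases)
  have "{P 0, g (-1)} \<in> R" using E[of "-1"] g0 by (simp add: insert_commute)
  then have "g (-1) = P 1 \<or> g (-1) = P (-1)" using nb by fastforce
  moreover have "g (-1) \<noteq> P 1" using D[of 0] g1 by simp
  ultimately have gm1: "g (-1) = P (-1)" by simp
  have nb': "\<And>x y. {P (- x), y} \<in> R \<Longrightarrow> y = P (- (x+1)) \<or> y = P (- (x-1))"
  proof -
    fix x y assume "{P (- x), y} \<in> R"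
    then have "y = P (-x+1) \<or> y = P (-x-1)" by (rule nb)
    moreover have e1: "- (x+1) = -x-1" and e2: "- (x-1) = -x+1" by simp_all
    ultimately show "y = P (- (x+1)) \<or> y = P (- (x-1))" unfolding e1 e2 by auto
  qed
  have E': "\<And>m. {g (- m), g (- (m+1))} \<in> R"
  proof -
    fix m
    have d: "{g (- m - 1), g (- m - 1 + 1)} \<in> R" by (rule E)
    have e1: "- m - 1 + 1 = - m" and e2: "- (m+1) = - m - 1" by simp_all
    show "{g (- m), g (- (m+1))} \<in> R" unfolding e2 using d unfolding e1 by (simp add: insert_commute)
  qed
  have D': "\<And>m. g (- (m+1)) \<noteq> g (- (m-1))"
  proof -
    fix m
    have d: "g (- m + 1) \<noteq> g (- m - 1)" by (rule D)
    have e1: "- (m+1) = - m - 1" and e2: "- (m-1) = - m + 1" by simp_all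
    show "g (- (m+1)) \<noteq> g (- (m-1))" unfolding e1 e2 using d by auto
  qed
  have "g (- int j) = P (- int j) \<and> g (- (int j + 1)) = P (- (int j + 1))"
    using path_nat[of "\<lambda>x. P (- x)" R "\<lambda>x. g (- x)", OF nb' E' D'] g0 gm1 by simp
  then show ?thesis using mj by simp
qed


lemma half_dvd: "n dvd 2*z \<Longrightarrow> (n div 2) dvd z"
proof -
  assume "n dvd 2*z"
  then have "2 * (n div 2) dvd 2 * z" using n_half by simp
  then show ?thesis by simp
qed

lemma nbI_P:
  assumes t: "t \<in> {1,-1}" and e: "{W (c + t*x*k) (d + x), y} \<in> dgp_inner n k"
  shows "y = W (c + t*(x+1)*k) (d + (x+1)) \<or> y = W (c + t*(x-1)*k) (d + (x-1))"
proof -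
  have y: "y = W (c + t*x*k + k) (d + x + 1) \<or> y = W (c + t*x*k - k) (d + x + 1)"
    using e by (simp add: nbrI_W)
  show ?thesis
  proof (cases "t = 1")
    case True
    have "W (c + t*x*k + k) (d + x + 1) = W (c + t*(x+1)*k) (d + (x+1))"
      by (rule W_eqI) (simp_all add: True algebra_simps)
    moreover have "W (c + t*x*k - k) (d + x + 1) = W (c + t*(x-1)*k) (d + (x-1))"
      by (rule W_eqI) (simp_all add: True algebra_simps)
    ultimately show ?thesis using y by auto
  next
    case False
    then have tt: "t = -1" using t by simp
    have "W (c + t*x*k + k) (d + x + 1) = W (c + t*(x-1)*k) (d + (x-1))"
      by (rule W_eqI) (simp_all add: tt algebra_simps)
    moreover have "W (c + t*x*k - k) (d + x + 1) = W (c + t*(x+1)*k) (d + (x+1))"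
      by (rule W_eqI) (simp_all add: tt algebra_simps)
    ultimately show ?thesis using y by auto
  qed
qed

lemma swap_cond:
  assumes f: "f \<in> autB n k" and sw: "\<forall>x\<in>dgp_verts n. isU (f x) \<noteq> isU x"
  shows "\<exists>s\<in>{1,-1}. (n div 2) dvd (k^2 - s)"
proof -
  have fE: "f \<in> stab (dgp_edges n k)" and fS: "f \<in> stab (dgp_spokes n)" using f by (auto simp: autB_eq)
  have fB: "f \<in> Bij (dgp_verts n)" using stab_Bij[OF fE] .
  have inj: "inj_on f (dgp_verts n)" using fB by (simp add: Bij_def bij_betw_def)
  have fV: "\<And>x. x \<in> dgp_verts n \<Longrightarrow> f x \<in> dgp_verts n" using Bij_in[OF fB] .
  have sO: "{f x, f y} \<in> dgp_inner n k" if e: "{x,y} \<in> dgp_outer n" for x y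
  proof -
    have xy: "x \<in> dgp_verts n" "y \<in> dgp_verts n" using edge_in_V[OF e O_pairsV] by auto
    have "{f x, f y} \<in> dgp_edges n k" using stab_app[OF fE E_pairsV O_E[OF e]] .
    then show ?thesis using E_WW O_type[OF e] sw xy by metis
  qed
  have sI: "{f x, f y} \<in> dgp_outer n" if e: "{x,y} \<in> dgp_inner n k" for x y
  proof -
    have xy: "x \<in> dgp_verts n" "y \<in> dgp_verts n" using edge_in_V[OF e I_pairsV] by auto
    have "{f x, f y} \<in> dgp_edges n k" using stab_app[OF fE E_pairsV I_E[OF e]] .
    then show ?thesis using E_UU I_type[OF e] sw xy by metis
  qed
  have sS: "{f x, f y} \<in> dgp_spokes n" if e: "{x,y} \<in> dgp_spokes n" for x y
    using stab_app[OF fS S_pairsV e] .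
  define g where "g m = f (U m 1)" for m
  obtain c d where g0: "g 0 = W c d"
    using vert_W[OF fV[OF U_in[of 0 1]]] sw g_def by (metis U_in isU_simps(1))
  have "{U 0 1, U 1 1} \<in> dgp_outer n" by (simp add: nbrO_U)
  then have "{g 0, g 1} \<in> dgp_inner n k" using sO by (simp add: g_def)
  then have "g 1 = W (c+k) (d+1) \<or> g 1 = W (c-k) (d+1)" using g0 by (simp add: nbrI_W)
  then obtain t where t: "t \<in> {1,-1}" "g 1 = W (c + t*1*k) (d+1)" by (metis insertCI mult_1 mult_1_right mult_minus_left diff_conv_add_uminus)
  define P where "P x = W (c + t*x*k) (d+x)" for x
  have gm: "g m = P m" for m
  proof (rule path_gen[where R="dgp_inner n k"])
    show "\<And>x y. {P x, y} \<in> dgp_inner n k \<Longrightarrow> y = P (x+1) \<or> y = P (x-1)"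
      unfolding P_def using nbI_P[OF t(1)] by blast
    show "\<And>m. {g m, g (m+1)} \<in> dgp_inner n k"
    proof -
      fix m
      have "{U m 1, U (m+1) 1} \<in> dgp_outer n" by (simp add: nbrO_U)
      then show "{g m, g (m+1)} \<in> dgp_inner n k" using sO by (simp add: g_def)
    qed
    show "\<And>m. g (m+1) \<noteq> g (m-1)"
    proof -
      fix m
      have "U (m+1) 1 \<noteq> U (m-1) 1" using n_ndvd2 by (simp add: U_eq)
      then show "g (m+1) \<noteq> g (m-1)" unfolding g_def using inj by (simp add: inj_on_eq_iff)
    qed
    show "g 0 = P 0" using g0 by (simp add: P_def)
    show "g 1 = P 1" using t by (simp add: P_def)
  qed
  have fW0: "f (W m 0) = U (c + t*m*k) (d+m+1)" for m
  proof -
    have "W m 0 = W m (1+1)" by (simp add: W_eq)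
    then have "{U m 1, W m 0} \<in> dgp_spokes n" by (simp add: nbrS_U)
    then have "{g m, f (W m 0)} \<in> dgp_spokes n" using sS by (simp add: g_def)
    then show ?thesis using gm[of m] by (simp add: P_def nbrS_W)
  qed
  obtain a b where fu: "f (U 0 0) = W a b"
    using vert_W[OF fV[OF U_in[of 0 0]]] sw by (metis U_in isU_simps(1))
  have fw: "f (W 0 1) = U a (b+1)"
  proof -
    have "{U 0 0, W 0 1} \<in> dgp_spokes n" by (simp add: nbrS_U)
    then have "{W a b, f (W 0 1)} \<in> dgp_spokes n" using sS fu by metis
    then show ?thesis by (simp add: nbrS_W)
  qed
  have "W k 0 = W (0+k) (1+1)" by (simp add: W_eq)
  then have "{W 0 1, W k 0} \<in> dgp_inner n k" by (simp add: nbrI_W)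
  then have A: "{U a (b+1), f (W k 0)} \<in> dgp_outer n" using sI fw by metis
  have "W (-k) 0 = W (0-k) (1+1)" by (simp add: W_eq)
  then have "{W 0 1, W (-k) 0} \<in> dgp_inner n k" by (simp add: nbrI_W)
  then have B: "{U a (b+1), f (W (-k) 0)} \<in> dgp_outer n" using sI fw by metis
  have A': "f (W k 0) = U (a+1) (b+1) \<or> f (W k 0) = U (a-1) (b+1)" using A by (simp add: nbrO_U)
  have B': "f (W (-k) 0) = U (a+1) (b+1) \<or> f (W (-k) 0) = U (a-1) (b+1)" using B by (simp add: nbrO_U)
  have "W k 0 \<noteq> W (-k) 0" using n_ndvd2k by (simp add: W_eq)
  then have ne: "f (W k 0) \<noteq> f (W (-k) 0)" using inj by (simp add: inj_on_eq_iff)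
  have fk: "f (W k 0) = U (c + t*k*k) (d+k+1)" using fW0[of k] .
  have fmk: "f (W (-k) 0) = U (c + t*(-k)*k) (d+(-k)+1)" using fW0[of "-k"] .
  from A' B' ne consider
      (c1) "f (W k 0) = U (a+1) (b+1)" "f (W (-k) 0) = U (a-1) (b+1)"
    | (c2) "f (W k 0) = U (a-1) (b+1)" "f (W (-k) 0) = U (a+1) (b+1)" by auto
  then show ?thesis
  proof cases
    case c1
    then have d1: "n dvd (c + t*k*k - (a+1))" and d2: "n dvd (c + t*(-k)*k - (a-1))"
      using fk fmk by (simp_all add: U_eq)
    have eqx: "(c + t*k*k - (a+1)) - (c + t*(-k)*k - (a-1)) = 2 * (t*k^2 - 1)"
      by (simp add: algebra_simps power2_eq_square)
    have "n dvd (c + t*k*k - (a+1)) - (c + t*(-k)*k - (a-1))" using dvd_diff[OF d1 d2] .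
    then have "n dvd 2 * (t*k^2 - 1)" unfolding eqx .
    then have h: "(n div 2) dvd (t*k^2 - 1)" by (rule half_dvd)
    show ?thesis
    proof (cases "t = 1")
      case True then show ?thesis using h by auto
    next
      case False
      then have "t = -1" using t by simp
      then have "(n div 2) dvd (k^2 - (-1))" using h
        by (metis dvd_minus_iff minus_diff_eq mult_minus1 diff_minus_eq_add add.commute uminus_add_conv_diff)
      then show ?thesis by auto
    qed
  next
    case c2
    then have d1: "n dvd (c + t*k*k - (a-1))" and d2: "n dvd (c + t*(-k)*k - (a+1))"
      using fk fmk by (simp_all add: U_eq)
    have eqx: "(c + t*k*k - (a-1)) - (c + t*(-k)*k - (a+1)) = 2 * (t*k^2 + 1)"
      by (simp add: algebra_simps power2_eq_square)
    have "n dvd (c + t*k*k - (a-1)) - (c + t*(-k)*k - (a+1))" using dvd_diff[OF d1 d2] .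
    then have "n dvd 2 * (t*k^2 + 1)" unfolding eqx .
    then have h: "(n div 2) dvd (t*k^2 + 1)" by (rule half_dvd)
    show ?thesis
    proof (cases "t = 1")
      case True then show ?thesis using h by auto
    next
      case False
      then have "t = -1" using t by simp
      then have "(n div 2) dvd (k^2 - 1)" using h
        by (metis dvd_minus_iff minus_diff_eq mult_minus1 add.commute uminus_add_conv_diff)
      then show ?thesis by auto
    qed
  qed
qed


lemma one_Bij: "one (BijGroup S) = (\<lambda>x\<in>S. x)" by (simp add: BijGroup_def)

lemma C_fix_id:
  assumes f: "f \<in> autC n k" and n4: "\<not> n dvd 4*k"
    and f0: "f (U 0 0) = U 0 0" and f1: "f (U 1 0) = U 1 0"
  shows "f = one (BijGroup (dgp_verts n))"
proof -
  have fO: "f \<in> stab (dgp_outer n)" and fI: "f \<in> stab (dgp_inner n k)" and fS: "f \<in> stab (dgp_spokes n)"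
    using f by (auto simp: autC_eq)
  have fB: "f \<in> Bij (dgp_verts n)" using stab_Bij[OF fO] .
  have inj: "inj_on f (dgp_verts n)" using fB by (simp add: Bij_def bij_betw_def)
  have cO: "{f x, f y} \<in> dgp_outer n" if "{x,y} \<in> dgp_outer n" for x y using stab_app[OF fO O_pairsV that] .
  have cI: "{f x, f y} \<in> dgp_inner n k" if "{x,y} \<in> dgp_inner n k" for x y using stab_app[OF fI I_pairsV that] .
  have cS: "{f x, f y} \<in> dgp_spokes n" if "{x,y} \<in> dgp_spokes n" for x y using stab_app[OF fS S_pairsV that] .
  have gm: "f (U m 0) = U m 0" for m
  proof (rule path_gen[where R="dgp_outer n" and P="\<lambda>x. U x 0" and g="\<lambda>m. f (U m 0)"])
    show "\<And>x y. {U x 0, y} \<in> dgp_outer n \<Longrightarrow> y = U (x+1) 0 \<or> y = U (x-1) 0" by (simp add: nbrO_U)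
    show "\<And>m. {f (U m 0), f (U (m+1) 0)} \<in> dgp_outer n"
      by (rule cO) (simp add: nbrO_U)
    show "\<And>m. f (U (m+1) 0) \<noteq> f (U (m-1) 0)"
    proof -
      fix m
      have "U (m+1) 0 \<noteq> U (m-1) 0" using n_ndvd2 by (simp add: U_eq)
      then show "f (U (m+1) 0) \<noteq> f (U (m-1) 0)" using inj by (simp add: inj_on_eq_iff)
    qed
  qed (use f0 f1 in simp_all)
  have W1: "f (W m 1) = W m 1" for m
  proof -
    have "{U m 0, W m 1} \<in> dgp_spokes n" by (simp add: nbrS_U)
    then have "{U m 0, f (W m 1)} \<in> dgp_spokes n" using cS gm by metis
    then show ?thesis by (simp add: nbrS_U)
  qed
  have W0: "f (W m 0) = W m 0" for m
  proof (rule ccontr)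
    assume ne: "f (W m 0) \<noteq> W m 0"
    have "W m 0 = W (m+k-k) (1+1)" by (simp add: W_eq)
    then have "{W (m+k) 1, W m 0} \<in> dgp_inner n k" by (simp add: nbrI_W)
    then have "{W (m+k) 1, f (W m 0)} \<in> dgp_inner n k" using cI W1 by metis
    then have a1: "f (W m 0) = W (m+k+k) (1+1) \<or> f (W m 0) = W (m+k-k) (1+1)" by (simp add: nbrI_W)
    have "W m 0 = W (m-k+k) (1+1)" by (simp add: W_eq)
    then have "{W (m-k) 1, W m 0} \<in> dgp_inner n k" by (simp add: nbrI_W)
    then have "{W (m-k) 1, f (W m 0)} \<in> dgp_inner n k" using cI W1 by metis
    then have a2: "f (W m 0) = W (m-k+k) (1+1) \<or> f (W m 0) = W (m-k-k) (1+1)" by (simp add: nbrI_W)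
    have e1: "W (m+k-k) (1+1) = W m 0" and e2: "W (m-k+k) (1+1) = W m 0" by (simp_all add: W_eq)
    have "W (m+k+k) (1+1) = W (m-k-k) (1+1)" using a1 a2 ne e1 e2 by metis
    then have "n dvd (m+k+k - (m-k-k))" by (simp add: W_eq)
    moreover have "m+k+k - (m-k-k) = 4*k" by simp
    ultimately show False using n4 by simp
  qed
  have U1: "f (U m 1) = U m 1" for m
  proof -
    have "{W m 0, U m 1} \<in> dgp_spokes n" by (simp add: nbrS_W)
    then have "{W m 0, f (U m 1)} \<in> dgp_spokes n" using cS W0 by metis
    then show ?thesis by (simp add: nbrS_W)
  qed
  have all: "f x = x" if x: "x \<in> dgp_verts n" for x
    using x by (rule vert_cases) (simp_all add: gm W0 W1 U1)
  show ?thesis unfolding one_Bij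
    by (rule extensionalityI[OF Bij_imp_extensional[OF fB]]) (simp_all add: all)
qed

lemma C_gen:
  assumes n4: "\<not> n dvd 4*k"
  shows "autC n k \<subseteq> generate (BijGroup (dgp_verts n)) {rho n, delta n, beta n}"
proof
  let ?G = "BijGroup (dgp_verts n)"
  let ?H = "generate ?G {rho n, delta n, beta n}"
  have grp: "group ?G" by (rule group_BijGroup)
  have CB: "autC n k \<subseteq> Bij (dgp_verts n)" unfolding autC_eq by (auto simp: stab_def)
  have gens: "{rho n, delta n, beta n} \<subseteq> carrier ?G" using rho_C delta_C beta_C CB by auto
  have Hsub: "subgroup ?H ?G" by (rule group.generate_is_subgroup[OF grp gens])
  have HB: "?H \<subseteq> Bij (dgp_verts n)" using subgroup.subset[OF Hsub] by simp
  have HC: "?H \<subseteq> autC n k"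
    by (rule group.generate_subgroup_incl[OF grp _ autC_subgroup]) (use rho_C delta_C beta_C in auto)
  have rhoH: "rho n \<in> ?H" and deltaH: "delta n \<in> ?H" and betaH: "beta n \<in> ?H"
    by (auto intro: generate.incl)
  have oneH: "one ?G \<in> ?H" by (rule generate.one)
  have one_app: "one ?G x = x" if "x \<in> dgp_verts n" for x using that by (simp add: one_Bij)
  have rpow: "\<exists>h\<in>?H. \<forall>x e. h (U x e) = U (x + int j) (e + int j)" for j
  proof (induction j)
    case 0 then show ?case using oneH one_app[OF U_in] by auto
  next
    case (Suc j)
    then obtain h where h: "h \<in> ?H" "\<forall>x e. h (U x e) = U (x + int j) (e + int j)" by blast
    have "h \<otimes>\<^bsub>?G\<^esub> rho n \<in> ?H" using subgroup.m_closed[OF Hsub h(1) rhoH] .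
    moreover have "\<forall>x e. (h \<otimes>\<^bsub>?G\<^esub> rho n) (U x e) = U (x + int (Suc j)) (e + int (Suc j))"
    proof (intro allI)
      fix x e
      have "(h \<otimes>\<^bsub>?G\<^esub> rho n) (U x e) = h (rho n (U x e))"
        using HB h(1) rhoH by (intro mult_apply) auto
      also have "\<dots> = U (x + 1 + int j) (e + 1 + int j)" using h(2) by (simp add: rho_U)
      also have "\<dots> = U (x + int (Suc j)) (e + int (Suc j))" by (simp add: algebra_simps)
      finally show "(h \<otimes>\<^bsub>?G\<^esub> rho n) (U x e) = U (x + int (Suc j)) (e + int (Suc j))" .
    qed
    ultimately show ?case by blast
  qed
  fix f assume f: "f \<in> autC n k"
  have fB: "f \<in> Bij (dgp_verts n)" using f CB by auto
  obtain a b where fa: "f (U 0 0) = U a b"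
    using vert_U[OF Bij_in[OF fB U_in] C_pres[OF f]] by blast
  define j where "j = nat ((-a) mod n)"
  have jj: "int j = (-a) mod n" using npos by (simp add: j_def)
  obtain h1 where h1: "h1 \<in> ?H" "\<forall>x e. h1 (U x e) = U (x + int j) (e + int j)" using rpow by blast
  have "h1 (U a b) = U 0 (b + int j)"
  proof -
    have "n dvd ((-a) mod n - (-a))" by (rule dvd_mod_diff)
    then have "n dvd (a + int j - 0)" by (simp add: jj algebra_simps)
    then show ?thesis using h1(2) by (simp add: U_eq)
  qed
  obtain h2 where h2: "h2 \<in> ?H" "h2 (U 0 (b + int j)) = U 0 0"
  proof (cases "even (b + int j)")
    case True
    then have "one ?G (U 0 (b + int j)) = U 0 0" using one_app by (simp add: U_eq)
    then show ?thesis using that oneH by blast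
  next
    case False
    then have "beta n (U 0 (b + int j)) = U 0 0" by (simp add: beta_U U_eq)
    then show ?thesis using that betaH by blast
  qed
  define u where "u = h2 \<otimes>\<^bsub>?G\<^esub> h1"
  have uH: "u \<in> ?H" unfolding u_def using subgroup.m_closed[OF Hsub h2(1) h1(1)] .
  define \<phi> where "\<phi> = u \<otimes>\<^bsub>?G\<^esub> f"
  have phiC: "\<phi> \<in> autC n k" unfolding \<phi>_def using subgroup.m_closed[OF autC_subgroup] uH HC f by auto
  have phiB: "\<phi> \<in> Bij (dgp_verts n)" using phiC CB by auto
  have phi0: "\<phi> (U 0 0) = U 0 0"
  proof -
    have "\<phi> (U 0 0) = u (f (U 0 0))" unfolding \<phi>_def using uH HB fB by (intro mult_apply) auto
    also have "\<dots> = h2 (h1 (U a b))" unfolding u_def fa using h1 h2 HB by (intro mult_apply) auto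
    also have "\<dots> = U 0 0" using \<open>h1 (U a b) = _\<close> h2 by simp
    finally show ?thesis .
  qed
  have "{U 0 0, U 1 0} \<in> dgp_outer n" by (simp add: nbrO_U)
  then have "{\<phi> (U 0 0), \<phi> (U 1 0)} \<in> dgp_outer n"
    using stab_app[OF _ O_pairsV] phiC by (auto simp: autC_eq)
  then have p1: "\<phi> (U 1 0) = U 1 0 \<or> \<phi> (U 1 0) = U (-1) 0" using phi0 by (simp add: nbrO_U)
  obtain h3 where h3: "h3 \<in> ?H" "h3 (U 0 0) = U 0 0" "h3 (\<phi> (U 1 0)) = U 1 0"
  proof (cases "\<phi> (U 1 0) = U 1 0")
    case True
    then show ?thesis using that oneH one_app by simp
  next
    case False
    then have "\<phi> (U 1 0) = U (-1) 0" using p1 by simp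
    then have "delta n (U 0 0) = U 0 0" "delta n (\<phi> (U 1 0)) = U 1 0" by (simp_all add: delta_U)
    then show ?thesis using that deltaH by blast
  qed
  define \<psi> where "\<psi> = h3 \<otimes>\<^bsub>?G\<^esub> \<phi>"
  have psiC: "\<psi> \<in> autC n k" unfolding \<psi>_def using subgroup.m_closed[OF autC_subgroup] h3(1) HC phiC by auto
  have h3B: "h3 \<in> Bij (dgp_verts n)" using h3(1) HB by auto
  have "\<psi> (U 0 0) = U 0 0" unfolding \<psi>_def using h3 phi0 mult_apply[OF h3B phiB U_in] by simp
  moreover have "\<psi> (U 1 0) = U 1 0" unfolding \<psi>_def using h3 mult_apply[OF h3B phiB U_in] by simp
  ultimately have psi1: "\<psi> = one ?G" using C_fix_id[OF psiC n4] by simp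
  define w where "w = h3 \<otimes>\<^bsub>?G\<^esub> u"
  have wH: "w \<in> ?H" unfolding w_def using subgroup.m_closed[OF Hsub h3(1) uH] .
  have "w \<otimes>\<^bsub>?G\<^esub> f = \<psi>"
    unfolding w_def \<psi>_def \<phi>_def
    by (rule monoid.m_assoc[OF group.is_monoid[OF grp]]) (use h3(1) uH HB fB in auto)
  then have "w \<otimes>\<^bsub>?G\<^esub> f = one ?G" using psi1 by simp
  then have "inv\<^bsub>?G\<^esub> f = w" using group.inv_equality[OF grp] wH HB fB by auto
  then have "f = inv\<^bsub>?G\<^esub> w" using group.inv_inv[OF grp] fB by (metis carrier_Bij)
  then show "f \<in> ?H" using subgroup.m_inv_closed[OF Hsub wH] by simp
qed


lemma not_n4:
  assumes s: "s \<in> {1,-1}" and hd: "(n div 2) dvd (k^2 - s)"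
  shows "\<not> n dvd 4*k"
proof
  assume "n dvd 4*k"
  then have "n dvd 2*(2*k)" by simp
  then have h1: "(n div 2) dvd 2*k" by (rule half_dvd)
  then have "(n div 2) dvd 2*k*k" by simp
  moreover have "(n div 2) dvd 2*(k^2 - s)" using hd by (rule dvd_mult)
  ultimately have dd: "(n div 2) dvd 2*k*k - 2*(k^2 - s)" by (rule dvd_diff)
  have eqq: "2*k*k - 2*(k^2 - s) = 2*s" by (simp add: power2_eq_square algebra_simps)
  have "(n div 2) dvd 2*s" using dd unfolding eqq .
  then have "(n div 2) dvd 2" using s by auto
  then have "n div 2 \<le> 2" by (rule zdvd_imp_le) simp
  then show False using n6 by simp
qed

lemma Lam_swaps:
  assumes s: "s \<in> {1,-1}"
  shows "\<forall>x\<in>dgp_verts n. isU (Lam s x) \<noteq> isU x"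
proof
  have so: "odd s" using s by auto
  fix x assume x: "x \<in> dgp_verts n"
  from vert_UW[OF x] show "isU (Lam s x) \<noteq> isU x"
    by (elim disjE exE) (auto simp: Lam_U[OF so] Lam_W[OF so])
qed

lemma B_in_K:
  assumes s: "s \<in> {1,-1}" and hd: "(n div 2) dvd (k^2 - s)"
    and K: "subgroup K (BijGroup (dgp_verts n))" and CK: "autC n k \<subseteq> K" and LK: "Lam s \<in> K"
  shows "autB n k \<subseteq> K"
proof
  let ?G = "BijGroup (dgp_verts n)"
  have grp: "group ?G" by (rule group_BijGroup)
  have LB: "Lam s \<in> autB n k" by (rule Lam_B[OF s hd])
  have BB: "autB n k \<subseteq> Bij (dgp_verts n)" unfolding autB_eq by (auto simp: stab_def)
  fix f assume f: "f \<in> autB n k"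
  from B_side[OF f] show "f \<in> K"
  proof
    assume "\<forall>x\<in>dgp_verts n. isU (f x) = isU x"
    then show ?thesis using B_pres_C[OF f] CK by blast
  next
    assume sw: "\<forall>x\<in>dgp_verts n. isU (f x) \<noteq> isU x"
    have fB: "f \<in> Bij (dgp_verts n)" and LBij: "Lam s \<in> Bij (dgp_verts n)" using f LB BB by auto
    let ?g = "Lam s \<otimes>\<^bsub>?G\<^esub> f"
    have gB: "?g \<in> autB n k" using subgroup.m_closed[OF autB_subgroup LB f] .
    have "\<forall>x\<in>dgp_verts n. isU (?g x) = isU x"
    proof
      fix x assume x: "x \<in> dgp_verts n"
      have "?g x = Lam s (f x)" using mult_apply[OF LBij fB x] .
      moreover have "f x \<in> dgp_verts n" using Bij_in[OF fB x] .
      ultimately show "isU (?g x) = isU x" using Lam_swaps[OF s] sw x by auto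
    qed
    then have "?g \<in> autC n k" using B_pres_C[OF gB] by blast
    then have gK: "?g \<in> K" using CK by blast
    have "f = inv\<^bsub>?G\<^esub> (Lam s) \<otimes>\<^bsub>?G\<^esub> ?g"
      using group.inv_solve_left[OF grp, of f "Lam s" ?g] fB LBij
        group.is_monoid[OF grp] monoid.m_closed[of ?G "Lam s" f] by simp
    moreover have "inv\<^bsub>?G\<^esub> (Lam s) \<otimes>\<^bsub>?G\<^esub> ?g \<in> K"
      using subgroup.m_closed[OF K subgroup.m_inv_closed[OF K LK] gK] .
    ultimately show ?thesis by simp
  qed
qed

lemma main_s:
  assumes s: "s \<in> {1,-1}" and hd: "(n div 2) dvd (k^2 - s)"
  shows "autB n k = generate (BijGroup (dgp_verts n)) (autC n k \<union> {Lam s})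
       \<and> autB n k = generate (BijGroup (dgp_verts n)) {rho n, delta n, beta n, Lam s}"
proof -
  let ?G = "BijGroup (dgp_verts n)"
  have grp: "group ?G" by (rule group_BijGroup)
  have LB: "Lam s \<in> autB n k" by (rule Lam_B[OF s hd])
  have BB: "autB n k \<subseteq> carrier ?G" unfolding autB_eq by (auto simp: stab_def)
  have S1: "autC n k \<union> {Lam s} \<subseteq> autB n k" using C_sub_B LB by auto
  have S2: "{rho n, delta n, beta n, Lam s} \<subseteq> autB n k" using C_sub_B LB rho_C delta_C beta_C by auto
  let ?G1 = "generate ?G (autC n k \<union> {Lam s})"
  let ?G2 = "generate ?G {rho n, delta n, beta n, Lam s}"
  have G1B: "?G1 \<subseteq> autB n k" by (rule group.generate_subgroup_incl[OF grp S1 autB_subgroup])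
  have G2B: "?G2 \<subseteq> autB n k" by (rule group.generate_subgroup_incl[OF grp S2 autB_subgroup])
  have G1sub: "subgroup ?G1 ?G" using group.generate_is_subgroup[OF grp] S1 BB by blast
  have G2sub: "subgroup ?G2 ?G" using group.generate_is_subgroup[OF grp] S2 BB by blast
  have "autB n k \<subseteq> ?G1"
    by (rule B_in_K[OF s hd G1sub]) (auto intro: generate.incl)
  moreover have "autB n k \<subseteq> ?G2"
  proof (rule B_in_K[OF s hd G2sub])
    have "autC n k \<subseteq> generate ?G {rho n, delta n, beta n}" by (rule C_gen[OF not_n4[OF s hd]])
    also have "\<dots> \<subseteq> ?G2" by (rule group.mono_generate[OF grp]) auto
    finally show "autC n k \<subseteq> ?G2" .
    show "Lam s \<in> ?G2" by (auto intro: generate.incl)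
  qed
  ultimately show ?thesis using G1B G2B by blast
qed

lemma part1:
  "autB n k \<noteq> autC n k \<longleftrightarrow> (\<exists>s\<in>{1,-1}. (n div 2) dvd (k^2 - s))"
proof
  assume "autB n k \<noteq> autC n k"
  then obtain f where f: "f \<in> autB n k" "f \<notin> autC n k" using C_sub_B by blast
  from B_side[OF f(1)] show "\<exists>s\<in>{1,-1}. (n div 2) dvd (k^2 - s)"
  proof
    assume "\<forall>x\<in>dgp_verts n. isU (f x) = isU x"
    then show ?thesis using B_pres_C[OF f(1)] f(2) by blast
  next
    assume "\<forall>x\<in>dgp_verts n. isU (f x) \<noteq> isU x"
    then show ?thesis using swap_cond[OF f(1)] by blast
  qed
next
  assume "\<exists>s\<in>{1,-1}. (n div 2) dvd (k^2 - s)"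
  then obtain s where s: "s \<in> {1,-1}" "(n div 2) dvd (k^2 - s)" by blast
  then show "autB n k \<noteq> autC n k" using Lam_B[OF s] Lam_notC[OF s(1)] by blast
qed

end

theorem lemma5p4:
  fixes n k :: int
  assumes "even n" and "even k" and "1 \<le> k" and "2 * k < n"
  shows "(autB n k \<noteq> autC n k \<longleftrightarrow>
            ([k^2 = 1] (mod (n div 2)) \<or> [k^2 = -1] (mod (n div 2))))
       \<and> ([k^2 = 1] (mod (n div 2)) \<longrightarrow>
            autB n k = generate (dgp_sym n) (autC n k \<union> {lam n k})
          \<and> autB n k = generate (dgp_sym n) {rho n, delta n, beta n, lam n k})
       \<and> ([k^2 = -1] (mod (n div 2)) \<longrightarrow>
            autB n k = generate (dgp_sym n) (autC n k \<union> {tau n k})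
          \<and> autB n k = generate (dgp_sym n) {rho n, delta n, beta n, tau n k})"
proof -
  interpret D: dgp n k using assms by unfold_locales
  have c1: "[k^2 = 1] (mod (n div 2)) \<longleftrightarrow> (n div 2) dvd (k^2 - 1)" by (rule cong_iff_dvd_diff)
  have c2: "[k^2 = -1] (mod (n div 2)) \<longleftrightarrow> (n div 2) dvd (k^2 - (-1))" by (rule cong_iff_dvd_diff)
  have P1: "(autB n k \<noteq> autC n k \<longleftrightarrow>
            ([k^2 = 1] (mod (n div 2)) \<or> [k^2 = -1] (mod (n div 2))))"
    unfolding D.part1 c1 c2 by auto
  have P2: "[k^2 = 1] (mod (n div 2)) \<longrightarrow>
            autB n k = generate (dgp_sym n) (autC n k \<union> {lam n k})
          \<and> autB n k = generate (dgp_sym n) {rho n, delta n, beta n, lam n k}"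
    using D.main_s[of 1] unfolding c1 D.lam_Lam by blast
  have P3: "[k^2 = -1] (mod (n div 2)) \<longrightarrow>
            autB n k = generate (dgp_sym n) (autC n k \<union> {tau n k})
          \<and> autB n k = generate (dgp_sym n) {rho n, delta n, beta n, tau n k}"
    using D.main_s[of "-1"] unfolding c2 D.tau_Lam by blast
  show ?thesis using P1 P2 P3 by blast
qed

end
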